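(* Consider the IPD process on $G=\mathbb{S}_d^n$ with $d>15$. Let $G'$ be an arbitrary star of $G$ with root $0$, leaves $1,\dots,d$, where $1,2$ are the external vertices. Let $M'>0$ and let $g_0,g_1,g_2$ be increasing (integer-valued) functions of $d$ with $g_2(d)=d/3-2$ and $1<g_0(d)<g_1(d)<g_2(d)$ for all $d$. Suppose the initial configuration is such that on $G'$ leaves $3,\dots,d-g_1$ are $\mathrm{C}$ and leaves $d-g_1+1,\dots,d$ are $\mathrm{D}$, while the states of all other vertices (including the root $0$ and the external vertices $1,2$ of $G'$) are arbitrary. Let $N_{\mathrm{D}}=|\{i\in\{3,\dots,d\}: A(i)=\mathrm{D}\}|$ and, for an integer $g$, let $T_g$ be the first time at which $N_{\mathrm{D}}=g$. Set $\Delta_2=g_2-g_1$, $\Delta_1=g_1-g_0$, $\rho=\sqrt{9/8}$, $\mu=g_0M'$. Then $$\mathbb{P}[T_{g_2}\ge T_{g_0}\wedge M']\le 2^{-\Delta_1}+\rho^{-\sqrt{\mu}/2}(\sqrt2)^{\Delta_2}+2^{-\mu/2}.$$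
   Context: IPD process on a finite graph: each vertex has an action in $\{\mathrm{C},\mathrm{D}\}$; each edge carries an independent rate-1 Poisson clock; when the clock of $(u,v)$ rings, $(A(u),A(v))$ is updated by $(\mathrm{C},\mathrm{C})\to(\mathrm{C},\mathrm{C})$, $(\mathrm{C},\mathrm{D})\to(\mathrm{D},\mathrm{D})$, $(\mathrm{D},\mathrm{C})\to(\mathrm{D},\mathrm{D})$, $(\mathrm{D},\mathrm{D})\to(\mathrm{C},\mathrm{C})$. $\mathbb{S}_d^n$ is the $(n,d)$-caterpillar: a tree whose internal vertices induce a path of $n$ vertices each of degree $d$; it is a chain of $n$ stars with $d$ leaves each, consecutive stars sharing one leaf edge. For a star of $\mathbb{S}_d^n$, the external vertices $1,2$ are the two leaves it shares with its neighbouring stars (for an extremal star, the one shared leaf and one arbitrary other leaf). $a\wedge b=\min\{a,b\}$. Time is continuous. *)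

theory Defs
  imports "HOL-Probability.Probability"
begin

datatype act = Cop | Def

fun ipd_rule :: "act \<times> act \<Rightarrow> act \<times> act" where
  "ipd_rule (Cop, Cop) = (Cop, Cop)"
| "ipd_rule (Cop, Def) = (Def, Def)"
| "ipd_rule (Def, Cop) = (Def, Def)"
| "ipd_rule (Def, Def) = (Cop, Cop)"

type_synonym vert = "nat \<times> nat"
type_synonym config = "vert \<Rightarrow> act"

definition ipd_update :: "config \<Rightarrow> vert \<times> vert \<Rightarrow> config" where
  "ipd_update A e = (case e of (u, v) \<Rightarrow>
     (case ipd_rule (A u, A v) of (a, b) \<Rightarrow> A(u := a, v := b)))"

text \<open>Spine (internal) vertices are (i,0) for i < n; vertex (i,0) has
  pend n d i pendant leaves (i,j), 1 <= j <= pend n d i, so that every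
  internal vertex has degree d.\<close>

definition pend :: "nat \<Rightarrow> nat \<Rightarrow> nat \<Rightarrow> nat" where
  "pend n d i = (if n = 1 then d else if i = 0 \<or> i = n - 1 then d - 1 else d - 2)"

definition cat_edges :: "nat \<Rightarrow> nat \<Rightarrow> (vert \<times> vert) set" where
  "cat_edges n d =
     {((i, 0), (i + 1, 0)) | i. i + 1 < n}
   \<union> {((i, 0), (i, j)) | i j. i < n \<and> 1 \<le> j \<and> j \<le> pend n d i}"

definition nbrs :: "(vert \<times> vert) set \<Rightarrow> vert \<Rightarrow> vert set" where
  "nbrs E v = {u. (v, u) \<in> E \<or> (u, v) \<in> E}"

text \<open>Superposition of the independent rate-1 edge clocks: the rings form a
  Poisson process of rate |E| (i.i.d. Exp(|E|) gaps) and each ring is at an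
  independently, uniformly chosen edge.\<close>

definition ipd_space :: "(vert \<times> vert) set \<Rightarrow> (nat \<Rightarrow> (vert \<times> vert) \<times> real) measure" where
  "ipd_space E = PiM UNIV (\<lambda>_. measure_pmf (pmf_of_set E)
       \<Otimes>\<^sub>M density lborel (exponential_density (real (card E))))"

fun jump :: "config \<Rightarrow> (nat \<Rightarrow> (vert \<times> vert) \<times> real) \<Rightarrow> nat \<Rightarrow> config" where
  "jump A0 \<omega> 0 = A0"
| "jump A0 \<omega> (Suc k) = ipd_update (jump A0 \<omega> k) (fst (\<omega> k))"

definition jump_time :: "(nat \<Rightarrow> (vert \<times> vert) \<times> real) \<Rightarrow> nat \<Rightarrow> real" where
  "jump_time \<omega> k = (\<Sum>j<k. snd (\<omega> j))"

definition ipd_state :: "config \<Rightarrow> (nat \<Rightarrow> (vert \<times> vert) \<times> real) \<Rightarrow> real \<Rightarrow> config" where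
  "ipd_state A0 \<omega> t = jump A0 \<omega> (card {k. 1 \<le> k \<and> jump_time \<omega> k \<le> t})"

text \<open>First time (infinity if never) at which the observable f equals g.\<close>
definition hit_time :: "(config \<Rightarrow> nat) \<Rightarrow> nat \<Rightarrow> (real \<Rightarrow> config) \<Rightarrow> ennreal" where
  "hit_time f g X = (INF t \<in> {t. 0 \<le> t \<and> f (X t) = g}. ennreal t)"

end

theory Submission
  imports Defs
begin

type_synonym seq = "nat \<Rightarrow> (vert \<times> vert) \<times> real"

definition shift :: "seq \<Rightarrow> seq" where "shift \<omega> = (\<lambda>n. \<omega> (Suc n))"

lemma shift_case_nat[simp]: "shift (case_nat x \<omega>) = \<omega>"
  by (simp add: shift_def)

locale chain =
  fixes E :: "(vert \<times> vert) set"
  assumes finE: "finite E" and neE: "E \<noteq> {}"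
begin

definition "c = real (card E)"
definition "Mx = measure_pmf (pmf_of_set E) \<Otimes>\<^sub>M density lborel (exponential_density c)"
abbreviation "S \<equiv> PiM (UNIV::nat set) (\<lambda>_. Mx)"

lemma c_pos: "c > 0"
  using finE neE by (simp add: c_def card_gt_0_iff)

lemma prob_D: "prob_space (density lborel (exponential_density c))"
  by (rule prob_space_exponential_density[OF c_pos])

lemma prob_Mx: "prob_space Mx"
  unfolding Mx_def by (intro prob_space_pair prob_D prob_space_measure_pmf)

sublocale sq: sequence_space Mx
proof -
  have "prob_space Mx" by (rule prob_Mx)
  then show "sequence_space Mx"
    by (simp add: sequence_space_def product_prob_space_def product_prob_space_axioms_def
        product_sigma_finite_def prob_space_imp_sigma_finite)
qed

lemma S_eq: "ipd_space E = S"
  by (simp add: ipd_space_def Mx_def c_def)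

lemma first_step:
  assumes f: "f \<in> borel_measurable S"
  shows "(\<integral>\<^sup>+ \<omega>. f \<omega> \<partial>S) = (\<integral>\<^sup>+ x. \<integral>\<^sup>+ \<omega>. f (case_nat x \<omega>) \<partial>S \<partial>Mx)"
proof -
  have "(\<integral>\<^sup>+ \<omega>. f \<omega> \<partial>S) = (\<integral>\<^sup>+ \<omega>. f \<omega> \<partial>distr (Mx \<Otimes>\<^sub>M S) S (\<lambda>(s, \<omega>). case_nat s \<omega>))"
    by (simp add: sq.PiM_iter)
  also have "\<dots> = (\<integral>\<^sup>+ z. f (case_prod case_nat z) \<partial>(Mx \<Otimes>\<^sub>M S))"
    by (rule nn_integral_distr) (auto simp: f)
  also have "\<dots> = (\<integral>\<^sup>+ x. \<integral>\<^sup>+ \<omega>. f (case_nat x \<omega>) \<partial>S \<partial>Mx)"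
  proof (subst sq.P.nn_integral_fst[symmetric])
    have "(\<lambda>z. case_nat (fst z) (snd z)) \<in> measurable (Mx \<Otimes>\<^sub>M S) S"
      by (rule measurable_case_nat'[OF measurable_fst measurable_snd])
    then have "(\<lambda>z. case_prod case_nat z) \<in> measurable (Mx \<Otimes>\<^sub>M S) S"
      by (simp add: split_beta')
    then show "(\<lambda>z. f (case_prod case_nat z)) \<in> borel_measurable (Mx \<Otimes>\<^sub>M S)"
      using f by (rule measurable_compose)
  qed simp
  finally show ?thesis .
qed

lemma meas_fst0: "(\<lambda>\<omega>. fst (\<omega> 0)) \<in> measurable S (count_space UNIV)"
proof -
  have 1: "fst \<in> measurable Mx (measure_pmf (pmf_of_set E))"
    unfolding Mx_def by (rule measurable_fst)
  have "measurable Mx (measure_pmf (pmf_of_set E)) = measurable Mx (count_space UNIV)"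
    by (rule measurable_cong_sets) simp_all
  with 1 have 2: "fst \<in> measurable Mx (count_space UNIV)" by simp
  have 3: "(\<lambda>\<omega>. \<omega> 0) \<in> measurable S Mx"
    using measurable_component_singleton[of 0 UNIV "\<lambda>_. Mx"] by simp
  show ?thesis using measurable_compose[OF 3 2] by simp
qed

lemma meas_snd0: "(\<lambda>\<omega>. snd (\<omega> 0)) \<in> borel_measurable S"
proof -
  have 1: "snd \<in> measurable Mx (density lborel (exponential_density c))"
    unfolding Mx_def by (rule measurable_snd)
  have "measurable Mx (density lborel (exponential_density c)) = measurable Mx (borel :: real measure)"
    by (rule measurable_cong_sets) simp_all
  with 1 have 2: "snd \<in> measurable Mx (borel :: real measure)" by simp
  have 3: "(\<lambda>\<omega>. \<omega> 0) \<in> measurable S Mx"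
    using measurable_component_singleton[of 0 UNIV "\<lambda>_. Mx"] by simp
  show ?thesis using measurable_compose[OF 3 2] by simp
qed

lemma meas_shift: "shift \<in> measurable S S"
  unfolding shift_def
  by (rule measurable_PiM_single') (auto simp: space_PiM)

lemma exp_mgf:
  assumes "0 \<le> b" "b < c"
  shows "(\<integral>\<^sup>+ g. ennreal (exp (b * g)) \<partial>density lborel (exponential_density c)) = ennreal (c / (c - b))"
proof -
  have cb: "c - b > 0" using assms by simp
  interpret D: prob_space "density lborel (exponential_density (c - b))"
    by (rule prob_space_exponential_density[OF cb])
  have one: "(\<integral>\<^sup>+ g. ennreal (exponential_density (c - b) g) \<partial>lborel) = 1"
    using D.emeasure_space_1 by (simp add: emeasure_density)
  have "(\<integral>\<^sup>+ g. ennreal (exp (b * g)) \<partial>density lborel (exponential_density c))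
      = (\<integral>\<^sup>+ g. ennreal (exponential_density c g) * ennreal (exp (b * g)) \<partial>lborel)"
    by (subst nn_integral_density) auto
  also have "\<dots> = (\<integral>\<^sup>+ g. ennreal (c / (c - b)) * ennreal (exponential_density (c - b) g) \<partial>lborel)"
  proof (rule nn_integral_cong)
    fix g :: real
    show "ennreal (exponential_density c g) * ennreal (exp (b * g)) =
          ennreal (c / (c - b)) * ennreal (exponential_density (c - b) g)"
    proof (cases "g < 0")
      case True then show ?thesis by (simp add: exponential_density_def)
    next
      case False
      have gg: "- g * (c - b) = - g * c + b * g" by (simp add: algebra_simps)
      have ee: "exp (- g * c) * exp (b * g) = exp (- g * (c - b))"
        by (simp only: gg exp_add)
      have "c * exp (- g * c) * exp (b * g) = c / (c - b) * ((c - b) * exp (- g * (c - b)))"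
        using cb by (simp only: mult.assoc ee) (simp add: field_simps)
      then show ?thesis using False c_pos cb
        by (simp add: exponential_density_def ennreal_mult[symmetric])
    qed
  qed
  also have "\<dots> = ennreal (c / (c - b))"
    by (subst nn_integral_cmult) (auto simp: one)
  finally show ?thesis .
qed

lemma factor:
  assumes v: "v \<in> borel_measurable borel"
  shows "(\<integral>\<^sup>+ x. u (fst x) * v (snd x) \<partial>Mx)
       = (\<Sum>e\<in>E. u e) / of_nat (card E) * (\<integral>\<^sup>+ g. v g \<partial>density lborel (exponential_density c))"
proof -
  interpret D: prob_space "density lborel (exponential_density c)" by (rule prob_D)
  have m: "(\<lambda>x. u (fst x) * v (snd x)) \<in> borel_measurable (measure_pmf (pmf_of_set E) \<Otimes>\<^sub>M density lborel (exponential_density c))"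
  proof -
    have "(\<lambda>x. u (fst x)) \<in> borel_measurable (measure_pmf (pmf_of_set E) \<Otimes>\<^sub>M density lborel (exponential_density c))"
      by (rule measurable_compose[OF measurable_fst]) simp
    moreover have "(\<lambda>x. v (snd x)) \<in> borel_measurable (measure_pmf (pmf_of_set E) \<Otimes>\<^sub>M density lborel (exponential_density c))"
    proof (rule measurable_compose[OF measurable_snd])
      have "measurable (density lborel (exponential_density c)) (borel :: ennreal measure) = measurable (borel :: real measure) borel"
        by (rule measurable_cong_sets) simp_all
      then show "v \<in> borel_measurable (density lborel (exponential_density c))" using v by simp
    qed
    ultimately show ?thesis by (rule borel_measurable_times_ennreal)
  qed
  have "(\<integral>\<^sup>+ x. u (fst x) * v (snd x) \<partial>Mx)
      = (\<integral>\<^sup>+ e. \<integral>\<^sup>+ g. u e * v g \<partial>density lborel (exponential_density c) \<partial>measure_pmf (pmf_of_set E))"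
    unfolding Mx_def by (subst D.nn_integral_fst[symmetric]) (auto simp: m)
  also have "\<dots> = (\<integral>\<^sup>+ e. u e * (\<integral>\<^sup>+ g. v g \<partial>density lborel (exponential_density c)) \<partial>measure_pmf (pmf_of_set E))"
  proof (intro nn_integral_cong nn_integral_cmult)
      have "measurable (density lborel (exponential_density c)) (borel :: ennreal measure) = measurable (borel :: real measure) borel"
        by (rule measurable_cong_sets) simp_all
      then show "v \<in> borel_measurable (density lborel (exponential_density c))" using v by simp
    qed
  also have "\<dots> = (\<integral>\<^sup>+ e. u e \<partial>measure_pmf (pmf_of_set E)) * (\<integral>\<^sup>+ g. v g \<partial>density lborel (exponential_density c))"
    by (rule nn_integral_multc) simp
  also have "\<dots> = (\<Sum>e\<in>E. u e) / of_nat (card E) * (\<integral>\<^sup>+ g. v g \<partial>density lborel (exponential_density c))"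
    by (simp add: nn_integral_pmf_of_set[OF neE finE])
  finally show ?thesis .
qed

end

fun hitlo :: "(config \<Rightarrow> nat) \<Rightarrow> nat \<Rightarrow> nat \<Rightarrow> nat \<Rightarrow> config \<Rightarrow> seq \<Rightarrow> ennreal" where
  "hitlo F lo hi 0 A \<omega> = 0"
| "hitlo F lo hi (Suc k) A \<omega> = (let A' = ipd_update A (fst (\<omega> 0)) in
     if F A' \<le> lo then 1 else if hi \<le> F A' then 0 else hitlo F lo hi k A' (shift \<omega>))"

fun Rw :: "(config \<Rightarrow> nat) \<Rightarrow> nat \<Rightarrow> nat \<Rightarrow> real \<Rightarrow> nat \<Rightarrow> config \<Rightarrow> seq \<Rightarrow> ennreal" where
  "Rw F lo hi b 0 A \<omega> = 0"
| "Rw F lo hi b (Suc k) A \<omega> = ennreal (exp (b * snd (\<omega> 0))) * (let A' = ipd_update A (fst (\<omega> 0)) in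
     if F A' \<le> lo then 0 else if hi \<le> F A' then 1 else Rw F lo hi b k A' (shift \<omega>))"

fun noex :: "(config \<Rightarrow> nat) \<Rightarrow> nat \<Rightarrow> nat \<Rightarrow> nat \<Rightarrow> config \<Rightarrow> seq \<Rightarrow> ennreal" where
  "noex F lo hi 0 A \<omega> = 1"
| "noex F lo hi (Suc k) A \<omega> = (let A' = ipd_update A (fst (\<omega> 0)) in
     if F A' \<le> lo \<or> hi \<le> F A' then 0 else noex F lo hi k A' (shift \<omega>))"

context chain
begin

lemma meas_hitlo: "hitlo F lo hi k A \<in> borel_measurable S"
proof (induction k arbitrary: A)
  case 0 then show ?case by simp
next
  case (Suc k)
  define G where "G = (\<lambda>e \<omega>. let A' = ipd_update A e in
     if F A' \<le> lo then 1 else if hi \<le> F A' then (0::ennreal) else hitlo F lo hi k A' (shift \<omega>))"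
  have "(\<lambda>\<omega>. G e \<omega>) \<in> borel_measurable S" for e
    unfolding G_def Let_def using measurable_compose[OF meas_shift Suc.IH] by auto
  then have "(\<lambda>\<omega>. G (fst (\<omega> 0)) \<omega>) \<in> borel_measurable S"
    by (rule measurable_compose_countable[OF _ meas_fst0])
  moreover have "hitlo F lo hi (Suc k) A = (\<lambda>\<omega>. G (fst (\<omega> 0)) \<omega>)"
    by (simp add: G_def fun_eq_iff)
  ultimately show ?case by simp
qed

lemma meas_noex: "noex F lo hi k A \<in> borel_measurable S"
proof (induction k arbitrary: A)
  case 0 then show ?case by simp
next
  case (Suc k)
  define G where "G = (\<lambda>e \<omega>. let A' = ipd_update A e in
     if F A' \<le> lo \<or> hi \<le> F A' then (0::ennreal) else noex F lo hi k A' (shift \<omega>))"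
  have "(\<lambda>\<omega>. G e \<omega>) \<in> borel_measurable S" for e
    unfolding G_def Let_def using measurable_compose[OF meas_shift Suc.IH] by auto
  then have "(\<lambda>\<omega>. G (fst (\<omega> 0)) \<omega>) \<in> borel_measurable S"
    by (rule measurable_compose_countable[OF _ meas_fst0])
  moreover have "noex F lo hi (Suc k) A = (\<lambda>\<omega>. G (fst (\<omega> 0)) \<omega>)"
    by (simp add: G_def fun_eq_iff)
  ultimately show ?case by simp
qed

lemma meas_exp0: "(\<lambda>\<omega>. ennreal (exp (b * snd (\<omega> 0)))) \<in> borel_measurable S"
proof -
  have "(\<lambda>x::real. ennreal (exp (b * x))) \<in> borel_measurable borel" by simp
  from measurable_compose[OF meas_snd0 this] show ?thesis .
qed

lemma meas_Rw: "Rw F lo hi b k A \<in> borel_measurable S"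
proof (induction k arbitrary: A)
  case 0 then show ?case by simp
next
  case (Suc k)
  define G where "G = (\<lambda>e \<omega>. let A' = ipd_update A e in
     if F A' \<le> lo then 0 else if hi \<le> F A' then (1::ennreal) else Rw F lo hi b k A' (shift \<omega>))"
  have "(\<lambda>\<omega>. G e \<omega>) \<in> borel_measurable S" for e
    unfolding G_def Let_def using measurable_compose[OF meas_shift Suc.IH] by auto
  then have "(\<lambda>\<omega>. G (fst (\<omega> 0)) \<omega>) \<in> borel_measurable S"
    by (rule measurable_compose_countable[OF _ meas_fst0])
  then have "(\<lambda>\<omega>. ennreal (exp (b * snd (\<omega> 0))) * G (fst (\<omega> 0)) \<omega>) \<in> borel_measurable S"
    by (rule borel_measurable_times_ennreal[OF meas_exp0])
  moreover have "Rw F lo hi b (Suc k) A = (\<lambda>\<omega>. ennreal (exp (b * snd (\<omega> 0))) * G (fst (\<omega> 0)) \<omega>)"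
    by (simp add: G_def fun_eq_iff)
  ultimately show ?case by simp
qed

lemma avg_bound:
  fixes Gi :: "_ \<Rightarrow> ennreal"
  assumes "\<And>e. e \<in> E \<Longrightarrow> Gi e \<le> ennreal (x e)" "\<And>e. e \<in> E \<Longrightarrow> 0 \<le> x e"
    and "(\<Sum>e\<in>E. x e) \<le> c * y"
  shows "(\<Sum>e\<in>E. Gi e) / of_nat (card E) \<le> ennreal y"
proof -
  have "(\<Sum>e\<in>E. Gi e) \<le> (\<Sum>e\<in>E. ennreal (x e))" by (rule sum_mono) (rule assms(1))
  also have "\<dots> = ennreal (\<Sum>e\<in>E. x e)" using assms(2) by (rule sum_ennreal)
  also have "\<dots> \<le> ennreal (c * y)" using assms(3) by (rule ennreal_leI)
  finally have 1: "(\<Sum>e\<in>E. Gi e) \<le> ennreal (c * y)" .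
  have y: "0 \<le> y"
  proof -
    have "0 \<le> (\<Sum>e\<in>E. x e)" using assms(2) by (rule sum_nonneg)
    then have "0 \<le> c * y" using assms(3) by linarith
    then show ?thesis using c_pos by (simp add: zero_le_mult_iff)
  qed
  have "(\<Sum>e\<in>E. Gi e) / of_nat (card E) \<le> ennreal (c * y) / ennreal c"
    using 1 by (simp add: c_def ennreal_of_nat_eq_real_of_nat divide_right_mono_ennreal)
  also have "\<dots> = ennreal y"
    using c_pos y by (simp add: divide_ennreal)
  finally show ?thesis .
qed

lemma D_one: "emeasure (density lborel (exponential_density c)) UNIV = 1"
proof -
  have "emeasure (density lborel (exponential_density c)) (space (density lborel (exponential_density c))) = 1"
    by (rule prob_space.emeasure_space_1[OF prob_D])
  then show ?thesis by simp
qed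

lemma one_exp: "(\<integral>\<^sup>+ g. 1 \<partial>density lborel (exponential_density c)) = 1"
  using exp_mgf[of 0] c_pos by simp

lemma step_fst:
  assumes "\<And>e. (\<lambda>\<omega>. G e \<omega>) \<in> borel_measurable S"
  shows "(\<integral>\<^sup>+ \<omega>. G (fst (\<omega> 0)) (shift \<omega>) \<partial>S) = (\<Sum>e\<in>E. \<integral>\<^sup>+ \<omega>. G e \<omega> \<partial>S) / of_nat (card E)"
proof -
  have m: "(\<lambda>\<omega>. G (fst (\<omega> 0)) (shift \<omega>)) \<in> borel_measurable S"
    using measurable_compose[OF meas_shift assms]
    by (rule measurable_compose_countable[OF _ meas_fst0])
  have "(\<integral>\<^sup>+ \<omega>. G (fst (\<omega> 0)) (shift \<omega>) \<partial>S) = (\<integral>\<^sup>+ x. (\<integral>\<^sup>+ \<omega>. G (fst x) \<omega> \<partial>S) * 1 \<partial>Mx)"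
    by (subst first_step[OF m]) simp
  also have "\<dots> = (\<Sum>e\<in>E. \<integral>\<^sup>+ \<omega>. G e \<omega> \<partial>S) / of_nat (card E)"
    by (subst factor[where u = "\<lambda>e. \<integral>\<^sup>+ \<omega>. G e \<omega> \<partial>S" and v = "\<lambda>_. 1"]) (simp_all add: D_one)
  finally show ?thesis .
qed

lemma step_exp:
  assumes "\<And>e. (\<lambda>\<omega>. G e \<omega>) \<in> borel_measurable S" "0 \<le> b" "b < c"
  shows "(\<integral>\<^sup>+ \<omega>. ennreal (exp (b * snd (\<omega> 0))) * G (fst (\<omega> 0)) (shift \<omega>) \<partial>S)
     = (\<Sum>e\<in>E. \<integral>\<^sup>+ \<omega>. G e \<omega> \<partial>S) / of_nat (card E) * ennreal (c / (c - b))"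
proof -
  have m0: "(\<lambda>\<omega>. G (fst (\<omega> 0)) (shift \<omega>)) \<in> borel_measurable S"
    using measurable_compose[OF meas_shift assms(1)]
    by (rule measurable_compose_countable[OF _ meas_fst0])
  have m: "(\<lambda>\<omega>. ennreal (exp (b * snd (\<omega> 0))) * G (fst (\<omega> 0)) (shift \<omega>)) \<in> borel_measurable S"
    by (rule borel_measurable_times_ennreal[OF meas_exp0 m0])
  have "(\<integral>\<^sup>+ \<omega>. ennreal (exp (b * snd (\<omega> 0))) * G (fst (\<omega> 0)) (shift \<omega>) \<partial>S)
      = (\<integral>\<^sup>+ x. \<integral>\<^sup>+ \<omega>. ennreal (exp (b * snd x)) * G (fst x) \<omega> \<partial>S \<partial>Mx)"
    by (subst first_step[OF m]) simp
  also have "\<dots> = (\<integral>\<^sup>+ x. (\<integral>\<^sup>+ \<omega>. G (fst x) \<omega> \<partial>S) * ennreal (exp (b * snd x)) \<partial>Mx)"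
    by (intro nn_integral_cong, subst nn_integral_cmult[OF assms(1)]) (rule mult.commute)
  also have "\<dots> = (\<Sum>e\<in>E. \<integral>\<^sup>+ \<omega>. G e \<omega> \<partial>S) / of_nat (card E) * ennreal (c / (c - b))"
    by (subst factor[where u = "\<lambda>e. \<integral>\<^sup>+ \<omega>. G e \<omega> \<partial>S" and v = "\<lambda>g. ennreal (exp (b * g))"])
       (simp_all add: exp_mgf assms)
  finally show ?thesis .
qed

end

context chain
begin

lemma int_one: "(\<integral>\<^sup>+ \<omega>. 1 \<partial>S) = 1"
  using sq.P.emeasure_space_1 by simp

lemma one_le: "1 \<le> x \<Longrightarrow> (1::ennreal) \<le> ennreal x"
  using ennreal_leI[of 1 x] by simp

lemma hit_bound:
  assumes phi0: "\<And>A. 0 \<le> phi A" and philo: "\<And>A. F A \<le> lo \<Longrightarrow> 1 \<le> phi A"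
    and drift: "\<And>A. lo < F A \<Longrightarrow> F A < hi \<Longrightarrow> (\<Sum>e\<in>E. phi (ipd_update A e)) \<le> c * phi A"
  shows "lo < F A \<Longrightarrow> F A < hi \<Longrightarrow> (\<integral>\<^sup>+ \<omega>. hitlo F lo hi k A \<omega> \<partial>S) \<le> ennreal (phi A)"
proof (induction k arbitrary: A)
  case 0 then show ?case by simp
next
  case (Suc k)
  define G where "G = (\<lambda>e \<omega>. let A' = ipd_update A e in
     if F A' \<le> lo then 1 else if hi \<le> F A' then (0::ennreal) else hitlo F lo hi k A' \<omega>)"
  have mG: "(\<lambda>\<omega>. G e \<omega>) \<in> borel_measurable S" for e
    unfolding G_def Let_def using meas_hitlo by auto
  have eq: "hitlo F lo hi (Suc k) A = (\<lambda>\<omega>. G (fst (\<omega> 0)) (shift \<omega>))"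
    by (simp add: G_def fun_eq_iff)
  have b: "(\<integral>\<^sup>+ \<omega>. G e \<omega> \<partial>S) \<le> ennreal (phi (ipd_update A e))" for e
  proof -
    consider "F (ipd_update A e) \<le> lo" | "\<not> F (ipd_update A e) \<le> lo" "hi \<le> F (ipd_update A e)"
      | "\<not> F (ipd_update A e) \<le> lo" "\<not> hi \<le> F (ipd_update A e)" by blast
    then show ?thesis
    proof cases
      case 1 then show ?thesis using philo[of "ipd_update A e"] by (simp add: G_def int_one one_le del: nn_integral_const)
    next
      case 2 then show ?thesis by (simp add: G_def)
    next
      case 3 then show ?thesis using Suc.IH[of "ipd_update A e"] by (simp add: G_def)
    qed
  qed
  have "(\<integral>\<^sup>+ \<omega>. hitlo F lo hi (Suc k) A \<omega> \<partial>S) = (\<Sum>e\<in>E. \<integral>\<^sup>+ \<omega>. G e \<omega> \<partial>S) / of_nat (card E)"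
    unfolding eq by (rule step_fst[OF mG])
  also have "\<dots> \<le> ennreal (phi A)"
    by (rule avg_bound[where x = "\<lambda>e. phi (ipd_update A e)"]) (use b phi0 drift Suc.prems in auto)
  finally show ?case .
qed

lemma Rw_bound:
  assumes h0: "\<And>A. 0 \<le> h A" and H: "0 < H" and hhi: "\<And>A. hi \<le> F A \<Longrightarrow> H \<le> h A"
    and b: "0 \<le> b" "b < c"
    and drift: "\<And>A. lo < F A \<Longrightarrow> F A < hi \<Longrightarrow> (\<Sum>e\<in>E. h (ipd_update A e)) \<le> (c - b) * h A"
  shows "lo < F A \<Longrightarrow> F A < hi \<Longrightarrow> (\<integral>\<^sup>+ \<omega>. Rw F lo hi b k A \<omega> \<partial>S) \<le> ennreal (h A / H)"
proof (induction k arbitrary: A)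
  case 0 then show ?case by simp
next
  case (Suc k)
  define G where "G = (\<lambda>e \<omega>. let A' = ipd_update A e in
     if F A' \<le> lo then 0 else if hi \<le> F A' then (1::ennreal) else Rw F lo hi b k A' \<omega>)"
  have mG: "(\<lambda>\<omega>. G e \<omega>) \<in> borel_measurable S" for e
    unfolding G_def Let_def using meas_Rw by auto
  have eq: "Rw F lo hi b (Suc k) A = (\<lambda>\<omega>. ennreal (exp (b * snd (\<omega> 0))) * G (fst (\<omega> 0)) (shift \<omega>))"
    by (simp add: G_def fun_eq_iff)
  have bd: "(\<integral>\<^sup>+ \<omega>. G e \<omega> \<partial>S) \<le> ennreal (h (ipd_update A e) / H)" for e
  proof -
    consider "F (ipd_update A e) \<le> lo" | "\<not> F (ipd_update A e) \<le> lo" "hi \<le> F (ipd_update A e)"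
      | "\<not> F (ipd_update A e) \<le> lo" "\<not> hi \<le> F (ipd_update A e)" by blast
    then show ?thesis
    proof cases
      case 1 then show ?thesis by (simp add: G_def)
    next
      case 2 then show ?thesis using hhi[of "ipd_update A e"] H by (simp add: G_def int_one one_le del: nn_integral_const)
    next
      case 3 then show ?thesis using Suc.IH[of "ipd_update A e"] by (simp add: G_def)
    qed
  qed
  have cb: "0 < c - b" using b by simp
  define y where "y = (c - b) * h A / (H * c)"
  have "(\<Sum>e\<in>E. h (ipd_update A e) / H) = (\<Sum>e\<in>E. h (ipd_update A e)) / H"
    by (simp add: sum_divide_distrib)
  also have "\<dots> \<le> (c - b) * h A / H"
    using drift[OF Suc.prems] H by (simp add: divide_right_mono)
  also have "\<dots> = c * y" using c_pos H by (simp add: y_def field_simps)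
  finally have sb: "(\<Sum>e\<in>E. h (ipd_update A e) / H) \<le> c * y" .
  have "(\<integral>\<^sup>+ \<omega>. Rw F lo hi b (Suc k) A \<omega> \<partial>S) = (\<Sum>e\<in>E. \<integral>\<^sup>+ \<omega>. G e \<omega> \<partial>S) / of_nat (card E) * ennreal (c / (c - b))"
    unfolding eq by (rule step_exp[OF mG b])
  also have "\<dots> \<le> ennreal y * ennreal (c / (c - b))"
    by (intro mult_right_mono avg_bound[where x = "\<lambda>e. h (ipd_update A e) / H"])
       (use bd h0 H sb in auto)
  also have "\<dots> = ennreal (h A / H)"
  proof -
    have "y * (c / (c - b)) = h A / H" using c_pos cb H by (simp add: y_def field_simps)
    moreover have "0 \<le> y" using c_pos cb H h0[of A] by (simp add: y_def)
    ultimately show ?thesis using c_pos cb by (simp add: ennreal_mult[symmetric])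
  qed
  finally show ?case .
qed

lemma noex_bound:
  assumes h0: "\<And>A. 0 \<le> h A" and H: "0 < H" and hin: "\<And>A. lo < F A \<Longrightarrow> F A < hi \<Longrightarrow> H \<le> h A"
    and b: "0 \<le> b" "b < c"
    and drift: "\<And>A. lo < F A \<Longrightarrow> F A < hi \<Longrightarrow> (\<Sum>e\<in>E. h (ipd_update A e)) \<le> (c - b) * h A"
  shows "lo < F A \<Longrightarrow> F A < hi \<Longrightarrow> (\<integral>\<^sup>+ \<omega>. noex F lo hi k A \<omega> \<partial>S) \<le> ennreal (((c - b) / c) ^ k * h A / H)"
proof (induction k arbitrary: A)
  case 0 then show ?case using hin[OF 0] H by (simp add: int_one one_le del: nn_integral_const)
next
  case (Suc k)
  define G where "G = (\<lambda>e \<omega>. let A' = ipd_update A e in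
     if F A' \<le> lo \<or> hi \<le> F A' then (0::ennreal) else noex F lo hi k A' \<omega>)"
  have mG: "(\<lambda>\<omega>. G e \<omega>) \<in> borel_measurable S" for e
    unfolding G_def Let_def using meas_noex by auto
  have eq: "noex F lo hi (Suc k) A = (\<lambda>\<omega>. G (fst (\<omega> 0)) (shift \<omega>))"
    by (simp add: G_def fun_eq_iff)
  have cb: "0 < c - b" using b by simp
  define q where "q = (c - b) / c"
  have q0: "0 \<le> q" using cb c_pos by (simp add: q_def)
  have bd: "(\<integral>\<^sup>+ \<omega>. G e \<omega> \<partial>S) \<le> ennreal (q ^ k * h (ipd_update A e) / H)" for e
  proof (cases "F (ipd_update A e) \<le> lo \<or> hi \<le> F (ipd_update A e)")
    case True then show ?thesis by (simp add: G_def)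
  next
    case False then show ?thesis using Suc.IH[of "ipd_update A e"] by (simp add: G_def q_def)
  qed
  have "(\<Sum>e\<in>E. q ^ k * h (ipd_update A e) / H) = q ^ k * (\<Sum>e\<in>E. h (ipd_update A e)) / H"
    by (simp add: sum_divide_distrib sum_distrib_left)
  also have "\<dots> \<le> q ^ k * ((c - b) * h A) / H"
    using drift[OF Suc.prems] H q0 by (intro divide_right_mono mult_left_mono) auto
  also have "\<dots> = c * (q ^ Suc k * h A / H)"
  proof -
    have cq: "c - b = c * q" using c_pos by (simp add: q_def)
    show ?thesis unfolding cq by (simp add: ac_simps)
  qed
  finally have sb: "(\<Sum>e\<in>E. q ^ k * h (ipd_update A e) / H) \<le> c * (q ^ Suc k * h A / H)" .
  have "(\<integral>\<^sup>+ \<omega>. noex F lo hi (Suc k) A \<omega> \<partial>S) = (\<Sum>e\<in>E. \<integral>\<^sup>+ \<omega>. G e \<omega> \<partial>S) / of_nat (card E)"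
    unfolding eq by (rule step_fst[OF mG])
  also have "\<dots> \<le> ennreal (q ^ Suc k * h A / H)"
    by (rule avg_bound[where x = "\<lambda>e. q ^ k * h (ipd_update A e) / H"]) (use bd h0 H q0 sb in auto)
  finally show ?case by (simp add: q_def)
qed

end

lemma upd_eq: "ipd_update A (u, v) = A(u := (if A u = A v then Cop else Def), v := (if A u = A v then Cop else Def))"
  by (cases "A u"; cases "A v") (simp_all add: ipd_update_def)

lemma upd_sym: "ipd_update A (u, v) = ipd_update A (v, u)"
  unfolding upd_eq by (auto simp: fun_eq_iff)

lemma no_loop: "(u, u) \<notin> cat_edges n d"
  by (auto simp: cat_edges_def)

lemma no_rev: "(u, v) \<in> cat_edges n d \<Longrightarrow> (v, u) \<notin> cat_edges n d"
  by (auto simp: cat_edges_def)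

lemma fst_snd0: "e \<in> cat_edges n d \<Longrightarrow> snd (fst e) = 0"
  by (auto simp: cat_edges_def)

lemma fin_edges: "finite (cat_edges n d)"
proof -
  have "cat_edges n d \<subseteq> (({..<n} \<times> {0::nat}) \<times> ({..<n+1} \<times> {..d}))"
    by (auto simp: cat_edges_def pend_def split: if_splits)
  then show ?thesis by (rule finite_subset) auto
qed

lemma leaf_edge:
  assumes "e \<in> cat_edges n d" "fst e = v \<or> snd e = v" "snd v \<noteq> 0"
    "(r, v) \<in> cat_edges n d \<or> (v, r) \<in> cat_edges n d"
  shows "e = (r, v)"
  using assms by (auto simp: cat_edges_def)

locale star =
  fixes n d i :: nat and \<sigma> :: "nat \<Rightarrow> vert"
  assumes d3: "3 \<le> d"
    and bij: "bij_betw \<sigma> {1..d} (nbrs (cat_edges n d) (i, 0))"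
    and spine: "{v \<in> nbrs (cat_edges n d) (i, 0). snd v = 0} \<subseteq> {\<sigma> 1, \<sigma> 2}"
begin

abbreviation "E \<equiv> cat_edges n d"
abbreviation "r \<equiv> (i, 0::nat)"

definition ND :: "config \<Rightarrow> nat" where "ND A = card {k \<in> {3..d}. A (\<sigma> k) = Def}"

lemma inj: "inj_on \<sigma> {1..d}" using bij by (simp add: bij_betw_def)

lemma sig_nbr: "k \<in> {1..d} \<Longrightarrow> \<sigma> k \<in> nbrs E r"
  using bij by (auto simp: bij_betw_def)

lemma sig_ne_r: "k \<in> {1..d} \<Longrightarrow> \<sigma> k \<noteq> r"
  using sig_nbr[of k] no_loop[of r n d] by (auto simp: nbrs_def)

lemma leaf_snd: assumes "k \<in> {3..d}" shows "snd (\<sigma> k) \<noteq> 0"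
proof
  assume "snd (\<sigma> k) = 0"
  then have "\<sigma> k \<in> {\<sigma> 1, \<sigma> 2}" using spine sig_nbr[of k] assms by auto
  then consider "\<sigma> k = \<sigma> 1" | "\<sigma> k = \<sigma> 2" by auto
  then show False
  proof cases
    case 1 then have "k = 1" using inj_onD[OF inj 1] assms d3 by auto
    then show False using assms by simp
  next
    case 2 then have "k = 2" using inj_onD[OF inj 2] assms d3 by auto
    then show False using assms by simp
  qed
qed

lemma leaf_only: assumes "k \<in> {3..d}" "e \<in> E" "fst e = \<sigma> k \<or> snd e = \<sigma> k"
  shows "e = (r, \<sigma> k)"
  using leaf_edge[OF assms(2,3) leaf_snd[OF assms(1)]] sig_nbr[of k] assms(1) by (auto simp: nbrs_def)

lemma leaf_r: assumes "k \<in> {3..d}" shows "(r, \<sigma> k) \<in> E"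
  using sig_nbr[of k] assms leaf_snd[OF assms] fst_snd0 by (fastforce simp: nbrs_def)

definition "R = {e \<in> E. fst e = r \<or> snd e = r}"
definition "oth e = (if fst e = r then snd e else fst e)"

lemma bij_oth: "bij_betw oth R (nbrs E r)"
proof (rule bij_betwI')
  fix x y assume "x \<in> R" "y \<in> R"
  then show "(oth x = oth y) = (x = y)"
    using no_rev no_loop unfolding R_def oth_def
    by (cases x; cases y) (auto split: if_splits)
next
  fix x assume "x \<in> R" then show "oth x \<in> nbrs E r"
    unfolding R_def oth_def nbrs_def by (cases x) auto
next
  fix y assume "y \<in> nbrs E r"
  then consider "(r, y) \<in> E" | "(y, r) \<in> E" by (auto simp: nbrs_def)
  then show "\<exists>x\<in>R. y = oth x"
  proof cases
    case 1 then show ?thesis by (intro bexI[of _ "(r, y)"]) (auto simp: R_def oth_def)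
  next
    case 2
    then have "y \<noteq> r" using no_loop by auto
    with 2 show ?thesis by (intro bexI[of _ "(y, r)"]) (auto simp: R_def oth_def)
  qed
qed

lemma upd_R: "e \<in> R \<Longrightarrow> ipd_update A e = ipd_update A (r, oth e)"
  unfolding R_def oth_def by (cases e) (auto simp: upd_sym)

lemma sum_R: "(\<Sum>e\<in>R. G (ipd_update A e)) = (\<Sum>k\<in>{1..d}. G (ipd_update A (r, \<sigma> k)))"
proof -
  have "(\<Sum>e\<in>R. G (ipd_update A e)) = (\<Sum>e\<in>R. G (ipd_update A (r, oth e)))"
    by (rule sum.cong) (simp_all add: upd_R)
  also have "\<dots> = (\<Sum>v\<in>nbrs E r. G (ipd_update A (r, v)))"
    by (rule sum.reindex_bij_betw[OF bij_oth])
  also have "\<dots> = (\<Sum>k\<in>{1..d}. G (ipd_update A (r, \<sigma> k)))"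
    by (rule sum.reindex_bij_betw[OF bij, symmetric])
  finally show ?thesis .
qed

lemma card_R: "card R = d"
  using bij_betw_same_card[OF bij_oth] bij_betw_same_card[OF bij] by simp

lemma R_sub: "R \<subseteq> E" by (auto simp: R_def)

lemma d_le_card: "d \<le> card E"
  using card_mono[OF fin_edges R_sub] card_R by simp

lemma E_ne: "E \<noteq> {}" using d_le_card d3 by auto

lemma off_R:
  assumes "e \<in> E" "e \<notin> R"
  shows "ipd_update A e r = A r" "\<And>k. k \<in> {3..d} \<Longrightarrow> ipd_update A e (\<sigma> k) = A (\<sigma> k)"
proof -
  obtain u v where e: "e = (u, v)" by (cases e)
  have ur: "u \<noteq> r" "v \<noteq> r" using assms by (auto simp: R_def e)
  then show "ipd_update A e r = A r" by (simp add: e upd_eq)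
  fix k assume k: "k \<in> {3..d}"
  have "u \<noteq> \<sigma> k" "v \<noteq> \<sigma> k" using leaf_only[OF k assms(1)] ur by (auto simp: e)
  then show "ipd_update A e (\<sigma> k) = A (\<sigma> k)" by (simp add: e upd_eq)
qed

lemma ND_cong: "(\<And>k. k \<in> {3..d} \<Longrightarrow> B (\<sigma> k) = A (\<sigma> k)) \<Longrightarrow> ND B = ND A"
  unfolding ND_def by (rule arg_cong[where f = card]) auto

lemma sum_E:
  assumes G: "\<And>B. (\<And>k. k \<in> {3..d} \<Longrightarrow> B (\<sigma> k) = A (\<sigma> k)) \<Longrightarrow> B r = A r \<Longrightarrow> G B = G A"
  shows "(\<Sum>e\<in>E. G (ipd_update A e)) = real (card E - d) * G A + (\<Sum>k\<in>{1..d}. G (ipd_update A (r, \<sigma> k)))"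
proof -
  have "(\<Sum>e\<in>E. G (ipd_update A e)) = (\<Sum>e\<in>E - R. G (ipd_update A e)) + (\<Sum>e\<in>R. G (ipd_update A e))"
    using sum.subset_diff[OF R_sub fin_edges] by simp
  also have "(\<Sum>e\<in>E - R. G (ipd_update A e)) = (\<Sum>e\<in>E - R. G A)"
    by (rule sum.cong) (auto intro!: G off_R)
  also have "\<dots> = real (card E - d) * G A"
    using card_Diff_subset[OF _ R_sub] fin_edges R_sub card_R
    by (simp add: finite_subset)
  finally show ?thesis by (simp add: sum_R)
qed

end

context star
begin

lemma act_ne: "(a \<noteq> Def) = (a = Cop)" "(a \<noteq> Cop) = (a = Def)"
  by (cases a; simp)+

lemma sig_inj: "j \<in> {1..d} \<Longrightarrow> k \<in> {1..d} \<Longrightarrow> j \<noteq> k \<Longrightarrow> \<sigma> j \<noteq> \<sigma> k"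
  using inj_onD[OF inj] by blast

lemma upd_r_sig: "ipd_update A (r, \<sigma> k) = A(r := (if A r = A (\<sigma> k) then Cop else Def), \<sigma> k := (if A r = A (\<sigma> k) then Cop else Def))"
  by (rule upd_eq)

definition "Dset A = {k \<in> {3..d}. A (\<sigma> k) = Def}"
definition "Cset A = {k \<in> {3..d}. A (\<sigma> k) \<noteq> Def}"

lemma ND_Dset: "ND A = card (Dset A)" by (simp add: ND_def Dset_def)

lemma card_Cset: "card (Cset A) = (d - 2) - ND A"
proof -
  have "Cset A = {3..d} - Dset A" by (auto simp: Cset_def Dset_def)
  moreover have "Dset A \<subseteq> {3..d}" by (auto simp: Dset_def)
  moreover have "finite (Dset A)" by (simp add: Dset_def)
  ultimately show ?thesis by (simp add: card_Diff_subset ND_Dset)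
qed

lemma ND_le: "ND A \<le> d - 2"
proof -
  have "Dset A \<subseteq> {3..d}" by (auto simp: Dset_def)
  then have "card (Dset A) \<le> card {3..d}" by (rule card_mono[rotated]) simp
  then show ?thesis by (simp add: ND_Dset)
qed

lemma ND_ext: assumes "k \<in> {1, 2}" shows "ND (A(r := x, \<sigma> k := x)) = ND A"
proof (rule ND_cong)
  fix j assume j: "j \<in> {3..d}"
  have "\<sigma> j \<noteq> \<sigma> k" using sig_inj[of j k] j assms d3 by auto
  moreover have "\<sigma> j \<noteq> r" using sig_ne_r[of j] j by auto
  ultimately show "(A(r := x, \<sigma> k := x)) (\<sigma> j) = A (\<sigma> j)" by simp
qed

lemma Dset_leaf: assumes k: "k \<in> {3..d}"
  shows "Dset (A(r := x, \<sigma> k := x)) = (if x = Def then insert k (Dset A) else Dset A - {k})"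
proof -
  have H: "(A(r := x, \<sigma> k := x)) (\<sigma> j) = (if j = k then x else A (\<sigma> j))" if "j \<in> {3..d}" for j
  proof -
    have "\<sigma> j \<noteq> r" using sig_ne_r[of j] that by auto
    moreover have "j \<noteq> k \<Longrightarrow> \<sigma> j \<noteq> \<sigma> k" using sig_inj[of j k] that k by auto
    ultimately show ?thesis by auto
  qed
  then have "Dset (A(r := x, \<sigma> k := x)) = {j \<in> {3..d}. (if j = k then x else A (\<sigma> j)) = Def}"
    unfolding Dset_def using H by (intro Collect_cong conj_cong) (simp_all del: fun_upd_apply)
  then show ?thesis using k by (auto simp: Dset_def)
qed

lemma ND_leaf: assumes k: "k \<in> {3..d}"
  shows "ND (A(r := x, \<sigma> k := x)) =
    (if x = Def then (if A (\<sigma> k) = Def then ND A else ND A + 1)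
     else (if A (\<sigma> k) = Def then ND A - 1 else ND A))"
proof -
  have fin: "finite (Dset A)" by (simp add: Dset_def)
  have "k \<in> Dset A \<longleftrightarrow> A (\<sigma> k) = Def" using k by (simp add: Dset_def)
  then show ?thesis
    unfolding ND_Dset Dset_leaf[OF k] using fin
    by (auto simp: card_insert_if)
qed

lemma ND_step: assumes "e \<in> E" shows "ND (ipd_update A e) \<le> ND A + 1"
proof (cases "e \<in> R")
  case False
  then have "ND (ipd_update A e) = ND A" using off_R[OF assms False] by (intro ND_cong) auto
  then show ?thesis by simp
next
  case True
  have "oth e \<in> nbrs E r" using bij_oth True by (auto simp: bij_betw_def)
  then have "oth e \<in> \<sigma> ` {1..d}" using bij by (simp add: bij_betw_def)
  then obtain k where k: "k \<in> {1..d}" "oth e = \<sigma> k" by blast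
  have u: "ipd_update A e = ipd_update A (r, \<sigma> k)" using upd_R[OF True] k by simp
  show ?thesis
  proof (cases "k \<in> {1, 2}")
    case True then show ?thesis unfolding u upd_r_sig by (simp add: ND_ext)
  next
    case False then have "k \<in> {3..d}" using k by auto
    then show ?thesis unfolding u upd_r_sig by (auto simp: ND_leaf)
  qed
qed

lemma sum_split:
  "(\<Sum>k\<in>{1..d}. T k) = T 1 + T 2 + (\<Sum>k\<in>Dset A. T k) + (\<Sum>k\<in>Cset A. T k)"
proof -
  have 1: "{1..d} = {1, 2} \<union> {3..d}" using d3 by auto
  have 2: "{3..d} = Dset A \<union> Cset A" by (auto simp: Dset_def Cset_def)
  have "(\<Sum>k\<in>{1..d}. T k) = (\<Sum>k\<in>{1,2}. T k) + (\<Sum>k\<in>{3..d}. T k)"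
    unfolding 1 by (rule sum.union_disjoint) auto
  also have "(\<Sum>k\<in>{3..d}. T k) = (\<Sum>k\<in>Dset A. T k) + (\<Sum>k\<in>Cset A. T k)"
    unfolding 2 by (rule sum.union_disjoint) (auto simp: Dset_def Cset_def)
  finally show ?thesis by (simp add: add.assoc)
qed

lemma sum_rootD:
  assumes "A r = Def"
  shows "(\<Sum>k\<in>{1..d}. f (ND (ipd_update A (r, \<sigma> k))) (ipd_update A (r, \<sigma> k) r))
    = f (ND A) (if A (\<sigma> 1) = Def then Cop else Def) + f (ND A) (if A (\<sigma> 2) = Def then Cop else Def)
      + real (ND A) * f (ND A - 1) Cop + real (d - 2 - ND A) * f (ND A + 1) Def"
proof -
  have a: "(\<Sum>k\<in>Dset A. f (ND (ipd_update A (r, \<sigma> k))) (ipd_update A (r, \<sigma> k) r)) = real (ND A) * f (ND A - 1) Cop"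
  proof -
    have "(\<Sum>k\<in>Dset A. f (ND (ipd_update A (r, \<sigma> k))) (ipd_update A (r, \<sigma> k) r)) = (\<Sum>k\<in>Dset A. f (ND A - 1) Cop)"
      by (rule sum.cong) (auto simp: Dset_def upd_r_sig ND_leaf assms)
    then show ?thesis by (simp add: ND_Dset)
  qed
  have b: "(\<Sum>k\<in>Cset A. f (ND (ipd_update A (r, \<sigma> k))) (ipd_update A (r, \<sigma> k) r)) = real (d - 2 - ND A) * f (ND A + 1) Def"
  proof -
    have "(\<Sum>k\<in>Cset A. f (ND (ipd_update A (r, \<sigma> k))) (ipd_update A (r, \<sigma> k) r)) = (\<Sum>k\<in>Cset A. f (ND A + 1) Def)"
      by (rule sum.cong) (auto simp: Cset_def upd_r_sig ND_leaf assms)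
    then show ?thesis by (simp add: card_Cset)
  qed
  show ?thesis
    unfolding sum_split[where A = A] a b using assms
    by (simp add: upd_r_sig ND_ext)
qed

lemma sum_rootC:
  assumes "A r = Cop"
  shows "(\<Sum>k\<in>{1..d}. f (ND (ipd_update A (r, \<sigma> k))) (ipd_update A (r, \<sigma> k) r))
    = f (ND A) (if A (\<sigma> 1) = Cop then Cop else Def) + f (ND A) (if A (\<sigma> 2) = Cop then Cop else Def)
      + real (ND A) * f (ND A) Def + real (d - 2 - ND A) * f (ND A) Cop"
proof -
  have a: "(\<Sum>k\<in>Dset A. f (ND (ipd_update A (r, \<sigma> k))) (ipd_update A (r, \<sigma> k) r)) = real (ND A) * f (ND A) Def"
  proof -
    have "(\<Sum>k\<in>Dset A. f (ND (ipd_update A (r, \<sigma> k))) (ipd_update A (r, \<sigma> k) r)) = (\<Sum>k\<in>Dset A. f (ND A) Def)"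
      by (rule sum.cong) (auto simp: Dset_def upd_r_sig ND_leaf assms)
    then show ?thesis by (simp add: ND_Dset)
  qed
  have b: "(\<Sum>k\<in>Cset A. f (ND (ipd_update A (r, \<sigma> k))) (ipd_update A (r, \<sigma> k) r)) = real (d - 2 - ND A) * f (ND A) Cop"
  proof -
    have "(\<Sum>k\<in>Cset A. f (ND (ipd_update A (r, \<sigma> k))) (ipd_update A (r, \<sigma> k) r)) = (\<Sum>k\<in>Cset A. f (ND A) Cop)"
      by (rule sum.cong) (auto simp: Cset_def upd_r_sig ND_leaf assms act_ne)
    then show ?thesis by (simp add: card_Cset)
  qed
  show ?thesis
    unfolding sum_split[where A = A] a b using assms
    by (simp add: upd_r_sig ND_ext)
qed

end

definition fh :: "nat \<Rightarrow> act \<Rightarrow> real" where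
  "fh N a = (if a = Def then 1 else 17/16) * (3/4) ^ N"

definition fphi :: "nat \<Rightarrow> nat \<Rightarrow> act \<Rightarrow> real" where
  "fphi g0 N a = 2 ^ g0 * (1/2) ^ N"

context star
begin

definition "hfun A = fh (ND A) (A r)"
definition "phi g0 A = fphi g0 (ND A) (A r)"

lemma sumE_f:
  "(\<Sum>e\<in>E. f (ND (ipd_update A e)) (ipd_update A e r)) =
   real (card E - d) * f (ND A) (A r) + (\<Sum>k\<in>{1..d}. f (ND (ipd_update A (r, \<sigma> k))) (ipd_update A (r, \<sigma> k) r))"
proof (rule sum_E[where G = "\<lambda>B. f (ND B) (B r)"])
  fix B :: config
  assume a: "\<And>k. k \<in> {3..d} \<Longrightarrow> B (\<sigma> k) = A (\<sigma> k)" and b: "B r = A r"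
  have "ND B = ND A" using a by (rule ND_cong)
  then show "f (ND B) (B r) = f (ND A) (A r)" using b by simp
qed

lemma cardE_d: "real (card E - d) = real (card E) - real d"
  using d_le_card by simp

lemma drift_h:
  assumes g: "g0 < ND A" "ND A < g2" "d = 3 * g2 + 6"
  shows "(\<Sum>e\<in>E. hfun (ipd_update A e)) \<le> (real (card E) - real g0 / 17) * hfun A"
proof -
  define N where "N = ND A"
  define p where "p = (3/4::real) ^ N"
  have p0: "0 < p" by (simp add: p_def)
  have N1: "1 \<le> N" using g by (simp add: N_def)
  have pm: "(3/4::real) ^ (N - 1) = p * (4/3)"
  proof -
    have "(3/4::real) ^ N = (3/4) ^ (N - 1) * (3/4)" using N1 by (metis Suc_diff_1 less_le_trans zero_less_one power_Suc2)
    then show ?thesis by (simp add: p_def)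
  qed
  have pp: "(3/4::real) ^ (N + 1) = p * (3/4)" by (simp add: p_def)
  have Nd: "N \<le> d - 2" using ND_le by (simp add: N_def)
  have rd: "real (d - 2 - N) = real d - 2 - real N" "real (d - Suc (Suc N)) = real d - 2 - real N" using Nd d3 by simp_all
  have f1: "fh (N - Suc 0) Cop = 17/16 * (p * (4/3))" "fh (Suc N) Def = p * (3/4)"
    using pm pp by (simp_all add: fh_def)
  have ext: "fh N a \<le> 17/16 * p" for a by (simp add: fh_def p_def)
  have "(\<Sum>e\<in>E. hfun (ipd_update A e)) = real (card E - d) * hfun A + (\<Sum>k\<in>{1..d}. fh (ND (ipd_update A (r, \<sigma> k))) (ipd_update A (r, \<sigma> k) r))"
    unfolding hfun_def by (rule sumE_f)
  also have "\<dots> \<le> (real (card E) - real g0 / 17) * hfun A"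
  proof (cases "A r = Def")
    case True
    have hA: "hfun A = p" by (simp add: hfun_def fh_def True N_def p_def)
    have "(\<Sum>k\<in>{1..d}. fh (ND (ipd_update A (r, \<sigma> k))) (ipd_update A (r, \<sigma> k) r))
        = fh N (if A (\<sigma> 1) = Def then Cop else Def) + fh N (if A (\<sigma> 2) = Def then Cop else Def)
          + real N * (17/16 * (p * (4/3))) + (real d - 2 - real N) * (p * (3/4))"
      unfolding sum_rootD[where A = A and f = fh, OF True] by (simp add: N_def[symmetric] f1 rd)
    also have "\<dots> \<le> 17/16 * p + 17/16 * p + real N * (17/16 * (p * (4/3))) + (real d - 2 - real N) * (p * (3/4))"
      using ext by (intro add_mono order_refl)
    also have "\<dots> = p * (17/8 + real N * 17 / 12 + (real d - 2 - real N) * 3 / 4)" by (simp add: algebra_simps)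
    also have "\<dots> \<le> p * (real d - real g0 / 17)"
    proof (rule mult_left_mono)
      have "real N \<le> real g2 - 1" "real g0 \<le> real N - 1" "real d = 3 * real g2 + 6" "0 \<le> real g2"
        using g by (simp_all add: N_def)
      then show "17/8 + real N * 17 / 12 + (real d - 2 - real N) * 3 / 4 \<le> real d - real g0 / 17"
        by (simp add: field_simps)
    qed (use p0 in simp)
    finally show ?thesis using cardE_d hA by (simp add: algebra_simps)
  next
    case False
    then have F: "A r = Cop" by (cases "A r") auto
    have hA: "hfun A = 17/16 * p" by (simp add: hfun_def fh_def F N_def p_def)
    have "(\<Sum>k\<in>{1..d}. fh (ND (ipd_update A (r, \<sigma> k))) (ipd_update A (r, \<sigma> k) r))
        = fh N (if A (\<sigma> 1) = Cop then Cop else Def) + fh N (if A (\<sigma> 2) = Cop then Cop else Def)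
          + real N * p + (real d - 2 - real N) * (17/16 * p)"
      unfolding sum_rootC[where A = A and f = fh, OF F] by (simp add: N_def[symmetric] fh_def rd p_def)
    also have "\<dots> \<le> 17/16 * p + 17/16 * p + real N * p + (real d - 2 - real N) * (17/16 * p)"
      using ext by (intro add_mono order_refl)
    also have "\<dots> = p * (17/8 + real N + (real d - 2 - real N) * 17 / 16)" by (simp add: algebra_simps)
    also have "\<dots> \<le> p * ((real d - real g0 / 17) * (17/16))"
    proof (rule mult_left_mono)
      have "real g0 \<le> real N - 1" using g by (simp add: N_def)
      then show "17/8 + real N + (real d - 2 - real N) * 17 / 16 \<le> (real d - real g0 / 17) * (17/16)"
        by (simp add: field_simps)
    qed (use p0 in simp)
    finally have X: "(\<Sum>k\<in>{1..d}. fh (ND (ipd_update A (r, \<sigma> k))) (ipd_update A (r, \<sigma> k) r)) \<le> p * ((real d - real g0 / 17) * (17/16))" .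
    have Y: "(real (card E) - real d) * (17/16 * p) + p * ((real d - real g0 / 17) * (17/16)) = (real (card E) - real g0 / 17) * (17/16 * p)"
      by (simp add: field_simps)
    show ?thesis unfolding hA cardE_d using X Y by linarith
  qed
  finally show ?thesis .
qed

lemma drift_phi:
  assumes g: "ND A < g2" "d = 3 * g2 + 6" "1 \<le> ND A"
  shows "(\<Sum>e\<in>E. phi g0 (ipd_update A e)) \<le> real (card E) * phi g0 A"
proof -
  define N where "N = ND A"
  define q where "q = (2::real) ^ g0 * (1/2) ^ N"
  have q0: "0 < q" by (simp add: q_def)
  have N1: "1 \<le> N" using g by (simp add: N_def)
  have qm: "(2::real) ^ g0 * (1/2) ^ (N - 1) = 2 * q"
  proof -
    have "(1/2::real) ^ N = (1/2) ^ (N - 1) * (1/2)" using N1 by (metis Suc_diff_1 less_le_trans zero_less_one power_Suc2)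
    then show ?thesis by (simp add: q_def)
  qed
  have qp: "(2::real) ^ g0 * (1/2) ^ (N + 1) = q / 2" by (simp add: q_def)
  have Nd: "N \<le> d - 2" using ND_le by (simp add: N_def)
  have rd: "real (d - 2 - N) = real d - 2 - real N" "real (d - Suc (Suc N)) = real d - 2 - real N" using Nd d3 by simp_all
  have f1: "fphi g0 (N - Suc 0) a = 2 * q" "fphi g0 (Suc N) a = q / 2" "fphi g0 N a = q" for a
    using qm qp by (simp_all add: fphi_def q_def)
  have pA: "phi g0 A = q" by (simp add: phi_def fphi_def q_def N_def)
  have "(\<Sum>e\<in>E. phi g0 (ipd_update A e)) = real (card E - d) * phi g0 A + (\<Sum>k\<in>{1..d}. fphi g0 (ND (ipd_update A (r, \<sigma> k))) (ipd_update A (r, \<sigma> k) r))"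
    unfolding phi_def by (rule sumE_f)
  also have "\<dots> \<le> real (card E) * phi g0 A"
  proof (cases "A r = Def")
    case True
    have "(\<Sum>k\<in>{1..d}. fphi g0 (ND (ipd_update A (r, \<sigma> k))) (ipd_update A (r, \<sigma> k) r))
        = q + q + real N * (2 * q) + (real d - 2 - real N) * (q / 2)"
      unfolding sum_rootD[where A = A and f = "fphi g0", OF True] by (simp add: N_def[symmetric] f1 rd)
    also have "\<dots> = q * (2 + 2 * real N + (real d - 2 - real N) / 2)" by (simp add: field_simps)
    also have "\<dots> \<le> q * real d"
    proof (rule mult_left_mono)
      have "real N \<le> real g2 - 1" "real d = 3 * real g2 + 6" using g by (simp_all add: N_def)
      then show "2 + 2 * real N + (real d - 2 - real N) / 2 \<le> real d" by (simp add: field_simps)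
    qed (use q0 in simp)
    finally show ?thesis using cardE_d pA by (simp add: algebra_simps)
  next
    case False
    then have F: "A r = Cop" by (cases "A r") auto
    have "(\<Sum>k\<in>{1..d}. fphi g0 (ND (ipd_update A (r, \<sigma> k))) (ipd_update A (r, \<sigma> k) r))
        = q + q + real N * q + (real d - 2 - real N) * q"
      unfolding sum_rootC[where A = A and f = "fphi g0", OF F] by (simp add: N_def[symmetric] fphi_def rd q_def)
    also have "\<dots> = q * real d" by (simp add: algebra_simps)
    finally show ?thesis using cardE_d pA by (simp add: algebra_simps)
  qed
  finally show ?thesis .
qed

end

lemma jump_shift: "jump A \<omega> (Suc m) = jump (ipd_update A (fst (\<omega> 0))) (shift \<omega>) m"
  by (induction m) (simp_all add: shift_def)

lemma jump_time_shift: "jump_time \<omega> (Suc m) = snd (\<omega> 0) + jump_time (shift \<omega>) m"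
  unfolding jump_time_def shift_def by (rule sum.lessThan_Suc_shift)

lemma jump_time_Suc: "jump_time \<omega> (Suc m) = jump_time \<omega> m + snd (\<omega> m)"
  unfolding jump_time_def by simp

lemma hitlo_char:
  assumes "1 \<le> m" "m \<le> k" "F (jump A \<omega> m) \<le> lo"
    "\<And>j. 1 \<le> j \<Longrightarrow> j < m \<Longrightarrow> lo < F (jump A \<omega> j) \<and> F (jump A \<omega> j) < hi"
  shows "hitlo F lo hi k A \<omega> = 1"
  using assms
proof (induction k arbitrary: A \<omega> m)
  case 0 then show ?case by simp
next
  case (Suc k)
  show ?case
  proof (cases "m = 1")
    case True
    with Suc.prems show ?thesis by (simp add: Let_def)
  next
    case False
    then obtain m' where m: "m = Suc m'" "1 \<le> m'" using Suc.prems(1) by (cases m) auto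
    have i1: "lo < F (jump A \<omega> 1) \<and> F (jump A \<omega> 1) < hi" using Suc.prems(4)[of 1] m by simp
    have "hitlo F lo hi k (ipd_update A (fst (\<omega> 0))) (shift \<omega>) = 1"
    proof (rule Suc.IH[of m'])
      show "1 \<le> m'" "m' \<le> k" using m Suc.prems by auto
      show "F (jump (ipd_update A (fst (\<omega> 0))) (shift \<omega>) m') \<le> lo"
        using Suc.prems(3) m by (simp del: jump.simps(2) add: jump_shift)
      fix j assume "1 \<le> j" "j < m'"
      then show "lo < F (jump (ipd_update A (fst (\<omega> 0))) (shift \<omega>) j) \<and> F (jump (ipd_update A (fst (\<omega> 0))) (shift \<omega>) j) < hi"
        using Suc.prems(4)[of "Suc j"] m by (simp del: jump.simps(2) add: jump_shift)
    qed
    then show ?thesis using i1 by (simp add: Let_def)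
  qed
qed

lemma Rw_char:
  assumes "1 \<le> m" "m \<le> k" "hi \<le> F (jump A \<omega> m)" "lo < hi"
    "\<And>j. 1 \<le> j \<Longrightarrow> j < m \<Longrightarrow> lo < F (jump A \<omega> j) \<and> F (jump A \<omega> j) < hi"
  shows "Rw F lo hi b k A \<omega> = ennreal (exp (b * jump_time \<omega> m))"
  using assms
proof (induction k arbitrary: A \<omega> m)
  case 0 then show ?case by simp
next
  case (Suc k)
  show ?case
  proof (cases "m = 1")
    case True
    with Suc.prems show ?thesis by (simp add: Let_def jump_time_def)
  next
    case False
    then obtain m' where m: "m = Suc m'" "1 \<le> m'" using Suc.prems(1) by (cases m) auto
    have i1: "lo < F (jump A \<omega> 1) \<and> F (jump A \<omega> 1) < hi" using Suc.prems(5)[of 1] m by simp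
    have "Rw F lo hi b k (ipd_update A (fst (\<omega> 0))) (shift \<omega>) = ennreal (exp (b * jump_time (shift \<omega>) m'))"
    proof (rule Suc.IH[of m'])
      show "1 \<le> m'" "m' \<le> k" "lo < hi" using m Suc.prems by auto
      show "hi \<le> F (jump (ipd_update A (fst (\<omega> 0))) (shift \<omega>) m')"
        using Suc.prems(3) m by (simp del: jump.simps(2) add: jump_shift)
      fix j assume "1 \<le> j" "j < m'"
      then show "lo < F (jump (ipd_update A (fst (\<omega> 0))) (shift \<omega>) j) \<and> F (jump (ipd_update A (fst (\<omega> 0))) (shift \<omega>) j) < hi"
        using Suc.prems(5)[of "Suc j"] m by (simp del: jump.simps(2) add: jump_shift)
    qed
    then show ?thesis using i1
      by (simp add: Let_def m jump_time_shift distrib_left exp_add ennreal_mult)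
  qed
qed

lemma noex_char:
  assumes "\<And>j. 1 \<le> j \<Longrightarrow> j \<le> k \<Longrightarrow> lo < F (jump A \<omega> j) \<and> F (jump A \<omega> j) < hi"
  shows "noex F lo hi k A \<omega> = 1"
  using assms
proof (induction k arbitrary: A \<omega>)
  case 0 then show ?case by simp
next
  case (Suc k)
  have i1: "lo < F (jump A \<omega> 1) \<and> F (jump A \<omega> 1) < hi" using Suc.prems[of 1] by simp
  have "noex F lo hi k (ipd_update A (fst (\<omega> 0))) (shift \<omega>) = 1"
  proof (rule Suc.IH)
    fix j assume "1 \<le> j" "j \<le> k"
    then show "lo < F (jump (ipd_update A (fst (\<omega> 0))) (shift \<omega>) j) \<and> F (jump (ipd_update A (fst (\<omega> 0))) (shift \<omega>) j) < hi"
      using Suc.prems[of "Suc j"] by (simp del: jump.simps(2) add: jump_shift)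
  qed
  then show ?case using i1 by (simp add: Let_def)
qed

lemma hitlo_mono: "hitlo F lo hi k A \<omega> \<le> hitlo F lo hi (Suc k) A \<omega>"
  by (induction k arbitrary: A \<omega>) (simp_all add: Let_def)

lemma Rw_unf: "Rw F lo hi b (Suc k) A \<omega> = ennreal (exp (b * snd (\<omega> 0))) * (if F (ipd_update A (fst (\<omega> 0))) \<le> lo then 0 else if hi \<le> F (ipd_update A (fst (\<omega> 0))) then 1 else Rw F lo hi b k (ipd_update A (fst (\<omega> 0))) (shift \<omega>))"
  by (simp add: Let_def)

lemma Rw_mono: "Rw F lo hi b k A \<omega> \<le> Rw F lo hi b (Suc k) A \<omega>"
proof (induction k arbitrary: A \<omega>)
  case 0 then show ?case by simp
next
  case (Suc k)
  let ?A = "ipd_update A (fst (\<omega> 0))"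
  have 1: "Rw F lo hi b (Suc k) A \<omega> = ennreal (exp (b * snd (\<omega> 0))) * (if F ?A \<le> lo then 0 else if hi \<le> F ?A then 1 else Rw F lo hi b k ?A (shift \<omega>))"
    by (rule Rw_unf)
  have 2: "Rw F lo hi b (Suc (Suc k)) A \<omega> = ennreal (exp (b * snd (\<omega> 0))) * (if F ?A \<le> lo then 0 else if hi \<le> F ?A then 1 else Rw F lo hi b (Suc k) ?A (shift \<omega>))"
    by (rule Rw_unf)
  show ?case unfolding 1 2
    by (auto intro!: mult_left_mono Suc.IH simp del: Rw.simps)
qed

lemma down_closed_card:
  assumes "finite K" "K \<subseteq> {1..}" "\<And>k k'. k \<in> K \<Longrightarrow> 1 \<le> k' \<Longrightarrow> k' \<le> k \<Longrightarrow> k' \<in> K"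
  shows "K = {1..card K}"
proof (cases "K = {}")
  case True then show ?thesis by simp
next
  case False
  define M where "M = Max K"
  have "M \<in> K" using assms(1) False by (simp add: M_def)
  have "K = {1..M}"
  proof
    show "K \<subseteq> {1..M}" using assms(1,2) by (auto simp: M_def)
    show "{1..M} \<subseteq> K" using assms(3)[OF \<open>M \<in> K\<close>] by auto
  qed
  then show ?thesis by simp
qed


lemma state_char:
  assumes pos: "\<And>k. 0 < snd (\<omega> k)"
  shows "\<exists>m. ipd_state A0 \<omega> t = jump A0 \<omega> m \<and> (m = 0 \<or> jump_time \<omega> m \<le> t)"
proof -
  define K where "K = {k. 1 \<le> k \<and> jump_time \<omega> k \<le> t}"
  have sm: "strict_mono (jump_time \<omega>)"
    unfolding strict_mono_Suc_iff using pos by (simp add: jump_time_Suc)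
  show ?thesis
  proof (cases "card K = 0")
    case True
    then have "ipd_state A0 \<omega> t = jump A0 \<omega> 0" by (simp add: ipd_state_def K_def)
    then show ?thesis by blast
  next
    case False
    then have fin: "finite K" by (meson card.infinite)
    have "K = {1..card K}"
    proof (rule down_closed_card[OF fin])
      show "K \<subseteq> {1..}" by (auto simp: K_def)
      fix k k' assume "k \<in> K" "1 \<le> k'" "k' \<le> k"
      then show "k' \<in> K" using strict_mono_less_eq[OF sm, of k' k] by (auto simp: K_def)
    qed
    then have "card K \<in> K" using False by (metis atLeastAtMost_iff le_refl less_one not_le)
    then show ?thesis by (auto simp: ipd_state_def K_def)
  qed
qed

lemma state_at_jump:
  assumes pos: "\<And>k. 0 < snd (\<omega> k)"
  shows "ipd_state A0 \<omega> (jump_time \<omega> m) = jump A0 \<omega> m"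
proof -
  have sm: "strict_mono (jump_time \<omega>)"
    unfolding strict_mono_Suc_iff using pos by (simp add: jump_time_Suc)
  have "{k. 1 \<le> k \<and> jump_time \<omega> k \<le> jump_time \<omega> m} = {1..m}"
    using strict_mono_less_eq[OF sm] by auto
  then show ?thesis by (simp add: ipd_state_def)
qed

lemma jump_time_nonneg:
  assumes pos: "\<And>k. 0 < snd (\<omega> k)"
  shows "0 \<le> jump_time \<omega> m"
  unfolding jump_time_def using pos by (intro sum_nonneg) (auto intro: less_imp_le)

context star
begin

lemma incl:
  assumes A0: "ND A0 = g1" and g: "g0 < g1" "g1 < g2" and b: "0 \<le> b"
    and pos: "\<And>k. 0 < snd (\<omega> k)" and inE: "\<And>k. fst (\<omega> k) \<in> E"
    and fail: "min (hit_time ND g0 (ipd_state A0 \<omega>)) (ennreal M') \<le> hit_time ND g2 (ipd_state A0 \<omega>)"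
  shows "(\<exists>k. 1 \<le> hitlo ND g0 g2 k A0 \<omega>) \<or> (\<exists>k. ennreal (exp (b * M')) \<le> Rw ND g0 g2 b k A0 \<omega>)
         \<or> (\<forall>k. 1 \<le> noex ND g0 g2 k A0 \<omega>)"
proof (rule ccontr)
  assume neg: "\<not> ?thesis"
  let ?X = "jump A0 \<omega>" and ?J = "jump_time \<omega>"
  let ?int = "\<lambda>j. g0 < ND (?X j) \<and> ND (?X j) < g2"
  have sm: "strict_mono ?J"
    unfolding strict_mono_Suc_iff using pos by (simp add: jump_time_Suc)
  from neg obtain k where "\<not> 1 \<le> noex ND g0 g2 k A0 \<omega>" by auto
  then have "\<exists>j. 1 \<le> j \<and> \<not> ?int j" using noex_char[where F = ND and lo = g0 and hi = g2 and k = k and A = A0 and \<omega> = \<omega>] by force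
  define \<tau> where "\<tau> = (LEAST j. 1 \<le> j \<and> \<not> ?int j)"
  have t1: "1 \<le> \<tau>" "\<not> ?int \<tau>" using LeastI_ex[OF \<open>\<exists>j. 1 \<le> j \<and> \<not> ?int j\<close>] by (simp_all add: \<tau>_def)
  have tint: "?int j" if "1 \<le> j" "j < \<tau>" for j
    using not_less_Least[of j "\<lambda>j. 1 \<le> j \<and> \<not> ?int j"] that by (auto simp: \<tau>_def)
  show False
  proof (cases "ND (?X \<tau>) \<le> g0")
    case True
    have "hitlo ND g0 g2 \<tau> A0 \<omega> = 1"
      by (rule hitlo_char[where F = ND and lo = g0 and hi = g2 and k = \<tau> and A = A0 and \<omega> = \<omega> and m = \<tau>, OF t1(1) order_refl True]) (use tint in auto)
    then have "1 \<le> hitlo ND g0 g2 \<tau> A0 \<omega>" by simp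
    then show False using neg by blast
  next
    case False
    then have hi: "g2 \<le> ND (?X \<tau>)" using t1 by auto
    show False
    proof (cases "M' \<le> ?J \<tau>")
      case True
      have "Rw ND g0 g2 b \<tau> A0 \<omega> = ennreal (exp (b * ?J \<tau>))"
        by (rule Rw_char[where F = ND and lo = g0 and hi = g2 and k = \<tau> and A = A0 and \<omega> = \<omega> and m = \<tau> and b = b, OF t1(1) order_refl hi]) (use g tint in auto)
      moreover have "exp (b * M') \<le> exp (b * ?J \<tau>)" using True b by (simp add: mult_left_mono)
      ultimately show False using neg by (metis ennreal_leI)
    next
      case False
      then have JM: "?J \<tau> < M'" by simp
      obtain p where p: "\<tau> = Suc p" using t1 by (cases \<tau>) auto
      have prev: "ND (?X p) < g2"
      proof (cases "p = 0")
        case True then show ?thesis using A0 g by simp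
      next
        case False then show ?thesis using tint[of p] p by simp
      qed
      have "ND (?X \<tau>) \<le> ND (?X p) + 1" unfolding p using ND_step[OF inE[of p], of "?X p"] by simp
      with hi prev have eq2: "ND (?X \<tau>) = g2" by simp
      have J0: "0 \<le> ?J \<tau>" using jump_time_nonneg[of \<omega>] pos by blast
      have T2: "hit_time ND g2 (ipd_state A0 \<omega>) \<le> ennreal (?J \<tau>)"
        unfolding hit_time_def
        by (rule INF_lower) (simp add: J0 state_at_jump[of \<omega>, OF pos] eq2)
      have T0: "ennreal (?J (Suc \<tau>)) \<le> hit_time ND g0 (ipd_state A0 \<omega>)"
        unfolding hit_time_def
      proof (rule INF_greatest)
        fix t assume "t \<in> {t. 0 \<le> t \<and> ND (ipd_state A0 \<omega> t) = g0}"
        then have t: "0 \<le> t" "ND (ipd_state A0 \<omega> t) = g0" by auto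
        obtain m where m: "ipd_state A0 \<omega> t = ?X m" "m = 0 \<or> ?J m \<le> t"
          using state_char[of \<omega> A0 t] pos by blast
        have nd: "ND (?X m) = g0" using t m by simp
        have "m \<noteq> 0"
        proof
          assume "m = 0" then show False using nd A0 g by simp
        qed
        have "\<not> m < \<tau>" using tint[of m] nd \<open>m \<noteq> 0\<close> by auto
        moreover have "m \<noteq> \<tau>" using nd eq2 g by auto
        ultimately have "Suc \<tau> \<le> m" by simp
        then have "?J (Suc \<tau>) \<le> ?J m" using strict_mono_less_eq[OF sm] by simp
        then show "ennreal (?J (Suc \<tau>)) \<le> ennreal t" using m(2) \<open>m \<noteq> 0\<close> by (simp add: ennreal_leI)
      qed
      have "?J \<tau> < ?J (Suc \<tau>)" using sm by (simp add: strict_mono_def)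
      then have "ennreal (?J \<tau>) < ennreal (?J (Suc \<tau>))" using J0 by (simp add: ennreal_less_iff)
      moreover have "ennreal (?J \<tau>) < ennreal M'" using JM J0 by (simp add: ennreal_less_iff)
      ultimately have "hit_time ND g2 (ipd_state A0 \<omega>) < hit_time ND g0 (ipd_state A0 \<omega>)"
         "hit_time ND g2 (ipd_state A0 \<omega>) < ennreal M'"
        using T2 T0 by (auto intro: order.strict_trans1 order.strict_trans2)
      then have "hit_time ND g2 (ipd_state A0 \<omega>) < min (hit_time ND g0 (ipd_state A0 \<omega>)) (ennreal M')"
        by simp
      then show False using fail by (simp add: not_le[symmetric])
    qed
  qed
qed

end

lemma final_arith:
  fixes g0 g1 g2 :: nat and M' m :: real
  assumes g: "1 \<le> g0" "g0 < g1" "g1 < g2" and M: "M' > 0" and m1: "m \<le> 1"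
    and mb: "m \<le> 2 ^ g0 * (1/2) ^ g1 + 17/16 * (3/4) ^ g1 / (3/4) ^ g2 / exp (real g0 / 17 * M')"
  shows "m \<le> 2 powr (- (real g1 - real g0)) + sqrt (9/8) powr (- sqrt (real g0 * M') / 2) * sqrt 2 powr (real g2 - real g1)
            + 2 powr (- (real g0 * M') / 2)"
proof -
  define k2 where "k2 = g2 - g1"
  have k2: "1 \<le> k2" "real g2 - real g1 = real k2" using g by (auto simp: k2_def)
  define \<mu> where "\<mu> = real g0 * M'"
  have mu0: "0 < \<mu>" using g M by (simp add: \<mu>_def)
  define s where "s = sqrt \<mu>"
  have s0: "0 < s" using mu0 by (simp add: s_def)
  have ss: "s * s = \<mu>" using mu0 by (simp add: s_def)
  define L where "L = ln (9/8::real)"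
  have L0: "0 < L" by (simp add: L_def)
  have L8: "L \<le> 1/8" using ln_le_minus_one[of "9/8::real"] by (simp add: L_def)
  have l2: "1/2 \<le> ln (2::real)"
    using ln_le_minus_one[of "1/2::real"] by (simp add: ln_div)
  have rho: "sqrt (9/8) powr (- s / 2) = exp (- s * L / 4)"
    by (simp add: powr_def ln_sqrt L_def)
  have s2: "sqrt 2 powr (real g2 - real g1) = sqrt 2 ^ k2"
    using k2 by (simp add: powr_realpow)
  define Q where "Q = sqrt (9/8) powr (- s / 2) * sqrt 2 powr (real g2 - real g1)"
  have Q0: "0 \<le> Q" by (simp add: Q_def)
  have t1: "2 powr (- (real g1 - real g0)) = 2 ^ g0 * (1/2) ^ g1"
  proof -
    have "2 powr (- (real g1 - real g0)) = 2 powr (real g0 - real g1)" by simp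
    also have "\<dots> = 2 powr real g0 / 2 powr real g1" by (rule powr_diff)
    also have "\<dots> = 2 ^ g0 / 2 ^ g1" by (simp add: powr_realpow)
    also have "\<dots> = 2 ^ g0 * (1/2) ^ g1" by (simp only: power_one_over divide_inverse mult_1 power_inverse)
    finally show ?thesis .
  qed
  have t3: "0 \<le> 2 powr (- (real g0 * M') / 2)" by simp
  have rhs: "2 powr (- (real g1 - real g0)) + sqrt (9/8) powr (- sqrt (real g0 * M') / 2) * sqrt 2 powr (real g2 - real g1)
            + 2 powr (- (real g0 * M') / 2) = 2 ^ g0 * (1/2) ^ g1 + Q + 2 powr (- (real g0 * M') / 2)"
    unfolding t1 Q_def s_def \<mu>_def by (rule refl)
  show ?thesis
  proof (cases "1 \<le> Q")
    case True
    have "0 \<le> (2::real) ^ g0 * (1/2) ^ g1" by simp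
    then show ?thesis unfolding rhs using m1 True t3 by linarith
  next
    case False
    have sq2: "1 \<le> sqrt (2::real)" by simp
    have "sqrt 2 ^ 1 \<le> sqrt (2::real) ^ k2" using k2 by (intro power_increasing) auto
    then have "exp (- s * L / 4) * sqrt 2 \<le> Q" unfolding Q_def rho s2 by (simp add: mult_left_mono)
    then have "exp (- s * L / 4) * sqrt 2 < 1" using False by simp
    then have "ln (exp (- s * L / 4) * sqrt 2) < 0" by (simp add: ln_less_zero_iff)
    then have "- s * L / 4 + ln 2 / 2 < 0" by (simp add: ln_mult ln_sqrt)
    then have "1 < s * L" using l2 by linarith
    then have s8: "8 \<le> s"
    proof -
      assume a: "1 < s * L"
      have "s * L \<le> s * (1/8)" using L8 s0 by simp
      then show ?thesis using a by simp
    qed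
    have key: "ln (17/16) - \<mu> / 17 \<le> - s * L / 4"
    proof -
      have "ln (17/16::real) \<le> 1/16" using ln_le_minus_one[of "17/16::real"] by simp
      moreover have "s * L / 4 \<le> s / 32" using L8 s0 by simp
      moreover have "8 * s \<le> s * s" using s8 s0 by simp
      ultimately show ?thesis unfolding ss[symmetric] using s8 by linarith
    qed
    have f1: "17/16 * exp (- (real g0 / 17 * M')) \<le> exp (- s * L / 4)"
    proof -
      have "17/16 * exp (- (real g0 / 17 * M')) = exp (ln (17/16) - \<mu> / 17)"
      proof -
        have e: "\<mu> / 17 = real g0 / 17 * M'" by (simp add: \<mu>_def)
        show ?thesis unfolding exp_diff e exp_minus by (simp add: field_simps)
      qed
      also have "\<dots> \<le> exp (- s * L / 4)" using key by simp
      finally show ?thesis .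
    qed
    have f2: "(3/4::real) ^ g1 / (3/4) ^ g2 = (4/3) ^ k2"
    proof -
      have "(3/4::real) ^ g2 = (3/4) ^ g1 * (3/4) ^ k2" using g by (simp add: k2_def power_add[symmetric])
      then show ?thesis by (simp add: power_divide)
    qed
    have f3: "(4/3::real) ^ k2 \<le> sqrt 2 ^ k2"
    proof (rule power_mono)
      show "4/3 \<le> sqrt (2::real)" by (rule real_le_rsqrt) (simp add: power2_eq_square)
    qed simp
    have f4: "17/16 * (3/4) ^ g1 / (3/4) ^ g2 / exp (real g0 / 17 * M') = (17/16 * exp (- (real g0 / 17 * M'))) * ((3/4::real) ^ g1 / (3/4) ^ g2)"
    proof -
      have "\<And>(a::real) b c x. a * b / c / exp x = (a * exp (- x)) * (b / c)"
        by (simp add: exp_minus field_simps)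
      then show ?thesis by blast
    qed
    have "17/16 * (3/4) ^ g1 / (3/4) ^ g2 / exp (real g0 / 17 * M') \<le> exp (- s * L / 4) * sqrt 2 ^ k2"
      unfolding f4 f2 by (rule mult_mono[OF f1 f3]) simp_all
    then have "17/16 * (3/4) ^ g1 / (3/4) ^ g2 / exp (real g0 / 17 * M') \<le> Q"
      unfolding Q_def rho s2 .
    then show ?thesis unfolding rhs using mb t3 by linarith
  qed
qed


context chain
begin

definition "Bbad = ((- E) \<times> (UNIV :: real set)) \<union> (UNIV \<times> {..0::real})"

lemma Bbad_sets: "Bbad \<in> sets Mx"
proof -
  have "(- E) \<times> (UNIV :: real set) \<in> sets Mx" unfolding Mx_def
    by (rule pair_measureI) simp_all
  moreover have "UNIV \<times> {..0::real} \<in> sets Mx" unfolding Mx_def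
    by (rule pair_measureI) simp_all
  ultimately show ?thesis unfolding Bbad_def by blast
qed

lemma Mx_Bbad: "emeasure Mx Bbad = 0"
proof -
  interpret D: prob_space "density lborel (exponential_density c)" by (rule prob_D)
  have 1: "emeasure Mx ((- E) \<times> (UNIV :: real set)) = 0"
  proof -
    have "emeasure Mx ((- E) \<times> (UNIV :: real set)) = emeasure (measure_pmf (pmf_of_set E)) (- E) * emeasure (density lborel (exponential_density c)) UNIV"
      unfolding Mx_def by (rule D.emeasure_pair_measure_Times) simp_all
    also have "emeasure (measure_pmf (pmf_of_set E)) (- E) = 0"
      using emeasure_pmf_of_set[OF neE finE, of "- E"] by simp
    finally show ?thesis by simp
  qed
  have 2: "emeasure Mx (UNIV \<times> {..0::real}) = 0"
  proof -
    have "emeasure Mx (UNIV \<times> {..0::real}) = emeasure (measure_pmf (pmf_of_set E)) UNIV * emeasure (density lborel (exponential_density c)) {..0}"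
      unfolding Mx_def by (rule D.emeasure_pair_measure_Times) simp_all
    also have "emeasure (density lborel (exponential_density c)) {..0} = 0"
    proof -
      have "emeasure (density lborel (exponential_density c)) {..0} = (\<integral>\<^sup>+ x. ennreal (exponential_density c x) * indicator {..0} x \<partial>lborel)"
        by (rule emeasure_density) simp_all
      also have "\<dots> = (\<integral>\<^sup>+ x. ennreal c * indicator {0::real} x \<partial>lborel)"
        by (intro nn_integral_cong) (auto simp: exponential_density_def indicator_def)
      also have "\<dots> = ennreal c * emeasure lborel {0::real}"
        by (rule nn_integral_cmult_indicator) simp
      also have "emeasure lborel {0::real} = 0"
        using emeasure_lborel_Icc_eq[of 0 "0::real"] by simp
      finally show ?thesis by simp
    qed
    finally show ?thesis by simp
  qed
  have "emeasure Mx Bbad \<le> emeasure Mx ((- E) \<times> (UNIV :: real set)) + emeasure Mx (UNIV \<times> {..0::real})"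
    unfolding Bbad_def
    by (rule emeasure_subadditive) (use Bbad_sets[unfolded Bbad_def] in \<open>auto simp: Mx_def intro!: pair_measureI\<close>)
  then show ?thesis using 1 2 by simp
qed

lemma meas_comp_bad: "(\<lambda>\<omega>. indicator Bbad (\<omega> k) :: ennreal) \<in> borel_measurable S"
proof -
  have "(\<lambda>\<omega>. \<omega> k) \<in> measurable S Mx"
    using measurable_component_singleton[of k UNIV "\<lambda>_. Mx"] by simp
  moreover have "(indicator Bbad :: _ \<Rightarrow> ennreal) \<in> borel_measurable Mx"
    using Bbad_sets by simp
  ultimately show ?thesis by (rule measurable_compose)
qed

lemma int_bad: "(\<integral>\<^sup>+ \<omega>. indicator Bbad (\<omega> k) \<partial>S) = 0"
proof (induction k)
  case 0
  have "(\<integral>\<^sup>+ \<omega>. indicator Bbad (\<omega> 0) \<partial>S) = (\<integral>\<^sup>+ x. \<integral>\<^sup>+ \<omega>. indicator Bbad x \<partial>S \<partial>Mx)"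
    using first_step[OF meas_comp_bad[of 0]] by simp
  also have "\<dots> = (\<integral>\<^sup>+ x. indicator Bbad x \<partial>Mx)"
    by (simp add: sq.P.emeasure_space_1)
  also have "\<dots> = 0" using Mx_Bbad Bbad_sets by simp
  finally show ?case .
next
  case (Suc k)
  have "(\<integral>\<^sup>+ \<omega>. indicator Bbad (\<omega> (Suc k)) \<partial>S) = (\<integral>\<^sup>+ x. \<integral>\<^sup>+ \<omega>. indicator Bbad (\<omega> k) \<partial>S \<partial>Mx)"
    using first_step[OF meas_comp_bad[of "Suc k"]] by simp
  also have "\<dots> = 0" using Suc.IH by simp
  finally show ?case .
qed

lemma bad_null: "emeasure S {\<omega> \<in> space S. \<omega> k \<in> Bbad} = 0"
proof -
  have "(\<lambda>\<omega>. \<omega> k) \<in> measurable S Mx"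
    using measurable_component_singleton[of k UNIV "\<lambda>_. Mx"] by simp
  from measurable_sets[OF this Bbad_sets]
  have Bs: "{\<omega> \<in> space S. \<omega> k \<in> Bbad} \<in> sets S" by (simp add: vimage_def Int_def conj_commute)
  have "emeasure S {\<omega> \<in> space S. \<omega> k \<in> Bbad} = (\<integral>\<^sup>+ \<omega>. indicator {\<omega> \<in> space S. \<omega> k \<in> Bbad} \<omega> \<partial>S)"
    using Bs by simp
  also have "\<dots> = (\<integral>\<^sup>+ \<omega>. indicator Bbad (\<omega> k) \<partial>S)"
    by (rule nn_integral_cong) (simp add: indicator_def)
  finally show ?thesis using int_bad by simp
qed

end

lemma sets_ge:
  fixes f :: "_ \<Rightarrow> ennreal"
  assumes "f \<in> borel_measurable M"
  shows "{\<omega> \<in> space M. a \<le> f \<omega>} \<in> sets M"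
proof -
  have "f -` {a..} \<inter> space M \<in> sets M" by (rule measurable_sets[OF assms]) simp
  moreover have "f -` {a..} \<inter> space M = {\<omega> \<in> space M. a \<le> f \<omega>}" by auto
  ultimately show ?thesis by simp
qed

lemma ind_le:
  fixes f :: "_ \<Rightarrow> ennreal"
  shows "indicator {\<omega> \<in> space M. a \<le> f \<omega>} \<omega> * a \<le> f \<omega>"
  by (auto simp: indicator_def)

theorem mainTheorem3:
  fixes n d i g0 g1 g2 :: nat and \<sigma> :: "nat \<Rightarrow> vert" and A0 :: config and M' :: real
  assumes "d > 15" and "1 \<le> n" and "i < n"
    and "bij_betw \<sigma> {1..d} (nbrs (cat_edges n d) (i, 0))"
    and "{v \<in> nbrs (cat_edges n d) (i, 0). snd v = 0} \<subseteq> {\<sigma> 1, \<sigma> 2}"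
    and "1 < g0" and "g0 < g1" and "g1 < g2" and "real g2 = real d / 3 - 2"
    and "M' > 0"
    and "\<forall>k\<in>{3..d - g1}. A0 (\<sigma> k) = Cop"
    and "\<forall>k\<in>{d - g1 + 1..d}. A0 (\<sigma> k) = Def"
  shows "let E = cat_edges n d;
             ND = (\<lambda>A. card {k \<in> {3..d}. A (\<sigma> k) = Def});
             T = (\<lambda>g \<omega>. hit_time ND g (ipd_state A0 \<omega>));
             \<Delta>2 = real g2 - real g1; \<Delta>1 = real g1 - real g0;
             \<rho> = sqrt (9 / 8); \<mu> = real g0 * M'
         in measure (ipd_space E) {\<omega> \<in> space (ipd_space E). T g2 \<omega> \<ge> min (T g0 \<omega>) (ennreal M')}
            \<le> 2 powr (- \<Delta>1) + \<rho> powr (- sqrt \<mu> / 2) * sqrt 2 powr \<Delta>2 + 2 powr (- \<mu> / 2)"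
proof -
  have d3: "3 \<le> d" using assms(1) by simp
  interpret st: star n d i \<sigma>
    using d3 assms(4) assms(5) by unfold_locales auto
  interpret ch: chain "cat_edges n d"
    using fin_edges st.E_ne by unfold_locales auto
  have NDeq: "(\<lambda>A. card {k \<in> {3..d}. A (\<sigma> k) = Def}) = st.ND"
    by (simp add: fun_eq_iff st.ND_def)
  have dg: "d = 3 * g2 + 6"
  proof -
    have "real d = real (3 * g2 + 6)" using assms(9) by simp
    then show ?thesis by (simp only: of_nat_eq_iff)
  qed
  have g1d: "g1 + 2 \<le> d" using dg assms(8) by simp
  have NDA0: "st.ND A0 = g1"
  proof -
    have "{k \<in> {3..d}. A0 (\<sigma> k) = Def} = {d - g1 + 1..d}"
    proof (intro set_eqI iffI)
      fix k assume "k \<in> {k \<in> {3..d}. A0 (\<sigma> k) = Def}"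
      then have k: "3 \<le> k" "k \<le> d" "A0 (\<sigma> k) = Def" by auto
      show "k \<in> {d - g1 + 1..d}"
      proof (rule ccontr)
        assume "k \<notin> {d - g1 + 1..d}"
        then have "k \<in> {3..d - g1}" using k by auto
        then show False using assms(11) k by auto
      qed
    next
      fix k assume "k \<in> {d - g1 + 1..d}"
      then show "k \<in> {k \<in> {3..d}. A0 (\<sigma> k) = Def}" using assms(12) g1d by auto
    qed
    moreover have "card {d - g1 + 1..d} = g1" using g1d by simp
    ultimately show ?thesis by (simp add: st.ND_def)
  qed
  define \<beta> where "\<beta> = real g0 / 17"
  have cc: "ch.c = real (card (cat_edges n d))" by (simp add: ch.c_def)
  have b0: "0 \<le> \<beta>" by (simp add: \<beta>_def)
  have bc: "\<beta> < ch.c"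
  proof -
    have "real g0 < real d" using assms(7,8) dg by simp
    moreover have "real d \<le> ch.c" using st.d_le_card cc by simp
    ultimately show ?thesis by (simp add: \<beta>_def)
  qed
  have bpos: "0 < \<beta>" using assms(6) by (simp add: \<beta>_def)

  define h2 where "h2 = (\<lambda>A. fh (min (st.ND A) g2) (A (i, 0)))"
  have h2_0: "0 \<le> h2 A" for A by (simp add: h2_def fh_def)
  have drift2: "(\<Sum>e\<in>cat_edges n d. h2 (ipd_update A e)) \<le> (ch.c - \<beta>) * h2 A"
    if "g0 < st.ND A" "st.ND A < g2" for A
  proof -
    have "(\<Sum>e\<in>cat_edges n d. h2 (ipd_update A e)) = (\<Sum>e\<in>cat_edges n d. st.hfun (ipd_update A e))"
    proof (rule sum.cong)
      fix e assume "e \<in> cat_edges n d"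
      then have "st.ND (ipd_update A e) \<le> g2" using st.ND_step[of e A] that by simp
      then show "h2 (ipd_update A e) = st.hfun (ipd_update A e)" by (simp add: h2_def st.hfun_def)
    qed simp
    also have "\<dots> \<le> (real (card (cat_edges n d)) - real g0 / 17) * st.hfun A"
      by (rule st.drift_h[OF that dg])
    also have "\<dots> = (ch.c - \<beta>) * h2 A"
      using that by (simp add: cc \<beta>_def h2_def st.hfun_def)
    finally show ?thesis .
  qed
  have int0: "g0 < st.ND A0" "st.ND A0 < g2" using NDA0 assms(7,8) by simp_all

  have B1: "(\<integral>\<^sup>+\<omega>. hitlo st.ND g0 g2 k A0 \<omega> \<partial>ch.S) \<le> ennreal (st.phi g0 A0)" for k
  proof (rule ch.hit_bound[where F = st.ND and lo = g0 and hi = g2 and phi = "st.phi g0" and A = A0 and k = k])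
    show "0 \<le> st.phi g0 A" for A by (simp add: st.phi_def fphi_def)
    show "1 \<le> st.phi g0 A" if "st.ND A \<le> g0" for A
    proof -
      have "(2::real) ^ st.ND A \<le> 2 ^ g0" using that by (intro power_increasing) auto
      then show ?thesis by (simp add: st.phi_def fphi_def power_one_over field_simps)
    qed
    show "(\<Sum>e\<in>cat_edges n d. st.phi g0 (ipd_update A e)) \<le> ch.c * st.phi g0 A"
      if "g0 < st.ND A" "st.ND A < g2" for A
      using st.drift_phi[of A g2 g0] that dg assms(6) cc by simp
  qed (use int0 in auto)
  have B2: "(\<integral>\<^sup>+\<omega>. Rw st.ND g0 g2 \<beta> k A0 \<omega> \<partial>ch.S) \<le> ennreal (h2 A0 / (3/4) ^ g2)" for k
  proof (rule ch.Rw_bound[where F = st.ND and lo = g0 and hi = g2 and h = h2 and H = "(3/4) ^ g2" and b = \<beta> and A = A0 and k = k])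
    show "0 < (3/4::real) ^ g2" by simp
    show "(3/4) ^ g2 \<le> h2 A" if "g2 \<le> st.ND A" for A
      using that by (simp add: h2_def fh_def)
  qed (use h2_0 b0 bc drift2 int0 in auto)
  have B3: "(\<integral>\<^sup>+\<omega>. noex st.ND g0 g2 k A0 \<omega> \<partial>ch.S) \<le> ennreal (((ch.c - \<beta>) / ch.c) ^ k * h2 A0 / (3/4) ^ g2)" for k
  proof (rule ch.noex_bound[where F = st.ND and lo = g0 and hi = g2 and h = h2 and H = "(3/4) ^ g2" and b = \<beta> and A = A0 and k = k])
    show "0 < (3/4::real) ^ g2" by simp
    show "(3/4) ^ g2 \<le> h2 A" if "g0 < st.ND A" "st.ND A < g2" for A
    proof -
      have "(3/4::real) ^ g2 \<le> (3/4) ^ st.ND A" using that by (intro power_decreasing) auto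
      also have "\<dots> \<le> h2 A" using that by (simp add: h2_def fh_def)
      finally show ?thesis .
    qed
  qed (use h2_0 b0 bc drift2 int0 in auto)

  have h2A0: "h2 A0 \<le> 17/16 * (3/4) ^ g1"
    using NDA0 assms(8) by (simp add: h2_def fh_def)
  have phiA0: "st.phi g0 A0 = 2 ^ g0 * (1/2) ^ g1" by (simp add: st.phi_def fphi_def NDA0)

  define H where "H k = {\<omega> \<in> space ch.S. 1 \<le> hitlo st.ND g0 g2 k A0 \<omega>}" for k
  define W where "W k = {\<omega> \<in> space ch.S. ennreal (exp (\<beta> * M')) \<le> Rw st.ND g0 g2 \<beta> k A0 \<omega>}" for k
  define N where "N k = {\<omega> \<in> space ch.S. 1 \<le> noex st.ND g0 g2 k A0 \<omega>}" for k
  define Z where "Z k = {\<omega> \<in> space ch.S. \<omega> k \<in> ch.Bbad}" for k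
  have Hs: "H k \<in> sets ch.S" for k unfolding H_def by (rule sets_ge[OF ch.meas_hitlo])
  have Ws: "W k \<in> sets ch.S" for k unfolding W_def by (rule sets_ge[OF ch.meas_Rw])
  have Ns: "N k \<in> sets ch.S" for k unfolding N_def by (rule sets_ge[OF ch.meas_noex])
  have Zs: "Z k \<in> sets ch.S" for k
  proof -
    have "(\<lambda>\<omega>. \<omega> k) \<in> measurable ch.S ch.Mx"
      using measurable_component_singleton[of k UNIV "\<lambda>_. ch.Mx"] by simp
    from measurable_sets[OF this ch.Bbad_sets]
    show ?thesis unfolding Z_def by (simp add: vimage_def Int_def conj_commute)
  qed
  define U where "U = (\<Union>k. H k) \<union> (\<Union>k. W k) \<union> (\<Inter>k. N k) \<union> (\<Union>k. Z k)"
  have Us: "U \<in> sets ch.S" unfolding U_def using Hs Ws Ns Zs by auto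

  define Fs where "Fs = {\<omega> \<in> space ch.S. min (hit_time st.ND g0 (ipd_state A0 \<omega>)) (ennreal M') \<le> hit_time st.ND g2 (ipd_state A0 \<omega>)}"
  have FU: "Fs \<subseteq> U"
  proof
    fix \<omega> assume w: "\<omega> \<in> Fs"
    show "\<omega> \<in> U"
    proof (cases "\<exists>k. \<omega> k \<in> ch.Bbad")
      case True then show ?thesis using w by (auto simp: U_def Z_def Fs_def)
    next
      case False
      then have pos: "\<And>k. 0 < snd (\<omega> k)" and inE: "\<And>k. fst (\<omega> k) \<in> cat_edges n d"
        by (auto simp: ch.Bbad_def mem_Times_iff not_le)
      have fl: "min (hit_time st.ND g0 (ipd_state A0 \<omega>)) (ennreal M') \<le> hit_time st.ND g2 (ipd_state A0 \<omega>)"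
        using w by (simp add: Fs_def)
      from st.incl[OF NDA0 assms(7) assms(8) b0 pos inE fl]
      show ?thesis using w by (auto simp: U_def H_def W_def N_def Fs_def)
    qed
  qed


  have m1: "measure ch.S (\<Union>k. H k) \<le> 2 ^ g0 * (1/2) ^ g1"
  proof -
    have e: "emeasure ch.S (H k) \<le> ennreal (2 ^ g0 * (1/2) ^ g1)" for k
    proof -
      have "emeasure ch.S (H k) = (\<integral>\<^sup>+\<omega>. indicator (H k) \<omega> * 1 \<partial>ch.S)" using Hs by simp
      also have "\<dots> \<le> (\<integral>\<^sup>+\<omega>. hitlo st.ND g0 g2 k A0 \<omega> \<partial>ch.S)"
        unfolding H_def by (intro nn_integral_mono ind_le)
      also have "\<dots> \<le> ennreal (2 ^ g0 * (1/2) ^ g1)" using B1[of k] phiA0 by simp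
      finally show ?thesis .
    qed
    have inc: "incseq H"
      by (rule incseq_SucI) (auto simp: H_def simp del: hitlo.simps intro: order_trans[OF _ hitlo_mono])
    have "emeasure ch.S (\<Union>k. H k) = (SUP k. emeasure ch.S (H k))"
    proof -
      have rs: "range H \<subseteq> sets ch.S" using Hs by auto
      show ?thesis using SUP_emeasure_incseq[OF rs inc] by simp
    qed
    also have "\<dots> \<le> ennreal (2 ^ g0 * (1/2) ^ g1)" using e by (simp add: SUP_le_iff)
    finally show ?thesis using ch.sq.P.emeasure_eq_measure by (simp add: ennreal_le_iff)
  qed

  define B where "B = h2 A0 / (3/4) ^ g2 / exp (\<beta> * M')"
  have m2: "measure ch.S (\<Union>k. W k) \<le> B"
  proof -
    have B0: "0 \<le> B" using h2_0[of A0] by (simp add: B_def)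
    have e: "emeasure ch.S (W k) \<le> ennreal B" for k
    proof -
      have "emeasure ch.S (W k) * ennreal (exp (\<beta> * M')) = (\<integral>\<^sup>+\<omega>. indicator (W k) \<omega> * ennreal (exp (\<beta> * M')) \<partial>ch.S)"
        using Ws by (simp add: nn_integral_multc)
      also have "\<dots> \<le> (\<integral>\<^sup>+\<omega>. Rw st.ND g0 g2 \<beta> k A0 \<omega> \<partial>ch.S)"
        unfolding W_def by (intro nn_integral_mono ind_le)
      also have "\<dots> \<le> ennreal (h2 A0 / (3/4) ^ g2)" by (rule B2)
      finally have "ennreal (measure ch.S (W k)) * ennreal (exp (\<beta> * M')) \<le> ennreal (h2 A0 / (3/4) ^ g2)"
        using ch.sq.P.emeasure_eq_measure by simp
      then have "measure ch.S (W k) * exp (\<beta> * M') \<le> h2 A0 / (3/4) ^ g2"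
        using h2_0[of A0] by (simp add: ennreal_mult[symmetric] ennreal_le_iff)
      then have "measure ch.S (W k) \<le> B" by (simp add: B_def pos_le_divide_eq mult_ac)
      then show ?thesis using ch.sq.P.emeasure_eq_measure by (simp add: ennreal_leI)
    qed
    have inc: "incseq W"
      by (rule incseq_SucI) (auto simp: W_def simp del: Rw.simps intro: order_trans[OF _ Rw_mono])
    have "emeasure ch.S (\<Union>k. W k) = (SUP k. emeasure ch.S (W k))"
    proof -
      have rs: "range W \<subseteq> sets ch.S" using Ws by auto
      show ?thesis using SUP_emeasure_incseq[OF rs inc] by simp
    qed
    also have "\<dots> \<le> ennreal B" using e by (simp add: SUP_le_iff)
    finally show ?thesis using ch.sq.P.emeasure_eq_measure B0 by (simp add: ennreal_le_iff)
  qed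

  have m3: "measure ch.S (\<Inter>k. N k) \<le> 0"
  proof -
    define q where "q = (ch.c - \<beta>) / ch.c"
    define C where "C = h2 A0 / (3/4) ^ g2"
    have q: "0 \<le> q" "q < 1" using bc bpos b0 by (auto simp: q_def)
    have C0: "0 \<le> C" using h2_0[of A0] by (simp add: C_def)
    have bnd: "measure ch.S (\<Inter>k. N k) \<le> q ^ k * C" for k
    proof -
      have "measure ch.S (\<Inter>k. N k) \<le> measure ch.S (N k)"
        by (rule ch.sq.P.finite_measure_mono) (use Ns in auto)
      also have "measure ch.S (N k) \<le> q ^ k * C"
      proof -
        have "emeasure ch.S (N k) = (\<integral>\<^sup>+\<omega>. indicator (N k) \<omega> * 1 \<partial>ch.S)" using Ns by simp
        also have "\<dots> \<le> (\<integral>\<^sup>+\<omega>. noex st.ND g0 g2 k A0 \<omega> \<partial>ch.S)"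
          unfolding N_def by (intro nn_integral_mono ind_le)
        also have "\<dots> \<le> ennreal (q ^ k * C)" using B3[of k] by (simp add: q_def C_def)
        finally show ?thesis using ch.sq.P.emeasure_eq_measure q C0 by (simp add: ennreal_le_iff)
      qed
      finally show ?thesis .
    qed
    have "(\<lambda>k. q ^ k * C) \<longlonglongrightarrow> 0"
      by (rule tendsto_mult_left_zero) (rule LIMSEQ_power_zero, use q in simp)
    then show ?thesis by (rule LIMSEQ_le_const) (use bnd in auto)
  qed

  have m4: "measure ch.S (\<Union>k. Z k) = 0"
  proof -
    have "emeasure ch.S (\<Union>k. Z k) = 0"
      by (rule emeasure_UN_eq_0) (use Zs ch.bad_null in \<open>auto simp: Z_def\<close>)
    then show ?thesis by (simp add: measure_def)
  qed

  have mU: "measure ch.S U \<le> 2 ^ g0 * (1/2) ^ g1 + B"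
  proof -
    have s1: "(\<Union>k. H k) \<in> sets ch.S" "(\<Union>k. W k) \<in> sets ch.S" "(\<Inter>k. N k) \<in> sets ch.S" "(\<Union>k. Z k) \<in> sets ch.S"
      using Hs Ws Ns Zs by auto
    have "measure ch.S U \<le> measure ch.S ((\<Union>k. H k) \<union> (\<Union>k. W k) \<union> (\<Inter>k. N k)) + measure ch.S (\<Union>k. Z k)"
      unfolding U_def by (rule measure_Un_le) (use s1 in auto)
    also have "measure ch.S ((\<Union>k. H k) \<union> (\<Union>k. W k) \<union> (\<Inter>k. N k)) \<le> measure ch.S ((\<Union>k. H k) \<union> (\<Union>k. W k)) + measure ch.S (\<Inter>k. N k)"
      by (rule measure_Un_le) (use s1 in auto)
    also have "measure ch.S ((\<Union>k. H k) \<union> (\<Union>k. W k)) \<le> measure ch.S (\<Union>k. H k) + measure ch.S (\<Union>k. W k)"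
      by (rule measure_Un_le) (use s1 in auto)
    finally show ?thesis using m1 m2 m3 m4 by simp
  qed

  have mF: "measure ch.S Fs \<le> 2 ^ g0 * (1/2) ^ g1 + B"
  proof (cases "Fs \<in> sets ch.S")
    case True
    then have "measure ch.S Fs \<le> measure ch.S U" using FU Us by (intro ch.sq.P.finite_measure_mono) auto
    then show ?thesis using mU by simp
  next
    case False
    then have "measure ch.S Fs = 0" by (simp add: measure_notin_sets)
    moreover have "0 \<le> B" using h2_0[of A0] by (simp add: B_def)
    ultimately show ?thesis by simp
  qed
  have mF1: "measure ch.S Fs \<le> 1" by (rule ch.sq.P.prob_le_1)
  have BB: "B \<le> 17/16 * (3/4) ^ g1 / (3/4) ^ g2 / exp (real g0 / 17 * M')"
    unfolding B_def \<beta>_def using h2A0 by (intro divide_right_mono) auto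
  have fin: "measure ch.S Fs \<le> 2 powr (- (real g1 - real g0)) + sqrt (9/8) powr (- sqrt (real g0 * M') / 2) * sqrt 2 powr (real g2 - real g1)
            + 2 powr (- (real g0 * M') / 2)"
    by (rule final_arith[OF _ assms(7) assms(8) assms(10) mF1]) (use assms(6) mF BB in auto)
  show ?thesis
    unfolding Let_def NDeq ch.S_eq using fin by (simp add: Fs_def)
qed


end
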